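(* $\int_{\mathbb{R}^d}\nabla W\cdot\nabla\mathcal Y_1\,dx\neq0$, where $\mathcal Y_1=\Re\mathcal Y_+$.
   Context: $d\ge5$. $W(x)=c_0(1+|x|^2)^{-\frac{d-2}{2}}$ with $c_0>0$ so that $-\Delta W=(|x|^{-4}*|W|^2)W$; $\widetilde W=\frac{d-2}{2}W+x\cdot\nabla W$; $(f,g)_{\dot H^1}=\Re\int\nabla f\cdot\overline{\nabla g}$. For real $f$: $L_+f=-\Delta f-(|x|^{-4}*W^2)f-2(|x|^{-4}*(Wf))W$, $L_-f=-\Delta f-(|x|^{-4}*W^2)f$; for $h=h_1+ih_2$, $\mathcal Lh=-L_-h_2+iL_+h_1$; $B(g,h)=\frac12\int(L_+g_1)h_1+\frac12\int(L_-g_2)h_2$, $\Phi(h)=B(h,h)$. Here $e_0>0$ and $\mathcal Y_\pm\in\mathcal S$ are the radial eigenfunctions of $\mathcal L$ with $\mathcal L\mathcal Y_\pm=\pm e_0\mathcal Y_\pm$, $\mathcal Y_+=\overline{\mathcal Y_-}$, for which there is $c>0$ with $\Phi(h)\ge c\|h\|^2_{\dot H^1}$ for all radial $h\in\dot H^1$ satisfying $(iW,h)_{\dot H^1}=(\widetilde W,h)_{\dot H^1}=B(\mathcal Y_\pm,h)=0$. *)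

theory Defs
  imports "HOL-Analysis.Analysis"
begin

text \<open>Functions on R^d are modelled on the type real^'n with d = CARD('n).\<close>

definition pdiff :: "'n::finite \<Rightarrow> (real^'n \<Rightarrow> 'b::real_normed_vector) \<Rightarrow> real^'n \<Rightarrow> 'b" where
  "pdiff i f x = vector_derivative (\<lambda>t::real. f (x + t *\<^sub>R axis i 1)) (at 0)"

fun pd_iter :: "'n::finite list \<Rightarrow> (real^'n \<Rightarrow> 'b::real_normed_vector) \<Rightarrow> real^'n \<Rightarrow> 'b" where
  "pd_iter [] f = f"
| "pd_iter (i # is) f = pdiff i (pd_iter is f)"

definition schwartz :: "(real^'n::finite \<Rightarrow> 'b::real_normed_vector) \<Rightarrow> bool" where
  "schwartz f \<longleftrightarrow>
     (\<forall>is. continuous_on UNIV (pd_iter is f) \<and>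
           (\<forall>i x. (\<lambda>t::real. pd_iter is f (x + t *\<^sub>R axis i 1)) differentiable (at 0)) \<and>
           (\<forall>N::nat. bounded (range (\<lambda>x. ((1 + norm x) ^ N) *\<^sub>R pd_iter is f x))))"

definition radial :: "(real^'n::finite \<Rightarrow> 'b) \<Rightarrow> bool" where
  "radial f \<longleftrightarrow> (\<forall>x y. norm x = norm y \<longrightarrow> f x = f y)"

definition lap :: "(real^'n::finite \<Rightarrow> 'b::real_normed_vector) \<Rightarrow> real^'n \<Rightarrow> 'b" where
  "lap f x = (\<Sum>i\<in>UNIV. pdiff i (pdiff i f) x)"

definition conv4 :: "(real^'n::finite \<Rightarrow> real) \<Rightarrow> real^'n \<Rightarrow> real" where
  "conv4 g x = (\<integral>y. g y / norm (x - y) ^ 4 \<partial>lborel)"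

definition Lplus :: "(real^'n::finite \<Rightarrow> real) \<Rightarrow> (real^'n \<Rightarrow> real) \<Rightarrow> real^'n \<Rightarrow> real" where
  "Lplus W f x = - lap f x - conv4 (\<lambda>y. W y ^ 2) x * f x
                 - 2 * conv4 (\<lambda>y. W y * f y) x * W x"

definition Lminus :: "(real^'n::finite \<Rightarrow> real) \<Rightarrow> (real^'n \<Rightarrow> real) \<Rightarrow> real^'n \<Rightarrow> real" where
  "Lminus W f x = - lap f x - conv4 (\<lambda>y. W y ^ 2) x * f x"

definition Lop :: "(real^'n::finite \<Rightarrow> real) \<Rightarrow> (real^'n \<Rightarrow> complex) \<Rightarrow> real^'n \<Rightarrow> complex" where
  "Lop W h x = Complex (- Lminus W (\<lambda>y. Im (h y)) x) (Lplus W (\<lambda>y. Re (h y)) x)"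

definition Bform :: "(real^'n::finite \<Rightarrow> real) \<Rightarrow> (real^'n \<Rightarrow> complex) \<Rightarrow> (real^'n \<Rightarrow> complex) \<Rightarrow> real" where
  "Bform W g h = (1/2) * (\<integral>x. Lplus W (\<lambda>y. Re (g y)) x * Re (h x) \<partial>lborel)
               + (1/2) * (\<integral>x. Lminus W (\<lambda>y. Im (g y)) x * Im (h x) \<partial>lborel)"

text \<open>Phi(h) = B(h,h), written in its (integrated by parts) energy form,
  which is the meaning of B(h,h) for h in the energy space.\<close>
definition Phi :: "(real^'n::finite \<Rightarrow> real) \<Rightarrow> (real^'n \<Rightarrow> complex) \<Rightarrow> real" where
  "Phi W h = (let h1 = (\<lambda>y. Re (h y)); h2 = (\<lambda>y. Im (h y)) in
      (1/2) * ((\<Sum>i\<in>UNIV. \<integral>x. (pdiff i h1 x)\<^sup>2 \<partial>lborel)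
               - (\<integral>x. conv4 (\<lambda>y. W y ^ 2) x * (h1 x)\<^sup>2 \<partial>lborel)
               - 2 * (\<integral>x. conv4 (\<lambda>y. W y * h1 y) x * W x * h1 x \<partial>lborel))
    + (1/2) * ((\<Sum>i\<in>UNIV. \<integral>x. (pdiff i h2 x)\<^sup>2 \<partial>lborel)
               - (\<integral>x. conv4 (\<lambda>y. W y ^ 2) x * (h2 x)\<^sup>2 \<partial>lborel)))"

definition hdot_inner :: "(real^'n::finite \<Rightarrow> complex) \<Rightarrow> (real^'n \<Rightarrow> complex) \<Rightarrow> real" where
  "hdot_inner f g = Re (\<Sum>i\<in>UNIV. \<integral>x. pdiff i f x * cnj (pdiff i g x) \<partial>lborel)"

definition hdot_norm2 :: "(real^'n::finite \<Rightarrow> complex) \<Rightarrow> real" where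
  "hdot_norm2 h = (\<Sum>i\<in>UNIV. \<integral>x. (cmod (pdiff i h x))\<^sup>2 \<partial>lborel)"

text \<open>(Classical representatives of) elements of H1dot(R^d), d >= 3:
  C^1 functions in L^(2d/(d-2)) with square integrable gradient.\<close>
definition in_Hdot1 :: "(real^'n::finite \<Rightarrow> complex) \<Rightarrow> bool" where
  "in_Hdot1 h \<longleftrightarrow>
     (\<forall>i x. (\<lambda>t::real. h (x + t *\<^sub>R axis i 1)) differentiable (at 0)) \<and>
     (\<forall>i. continuous_on UNIV (pdiff i h)) \<and>
     integrable lborel (\<lambda>x. cmod (h x) powr (2 * real CARD('n) / (real CARD('n) - 2))) \<and>
     (\<forall>i. integrable lborel (\<lambda>x. (cmod (pdiff i h x))\<^sup>2))"

end

theory Submission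
  imports Defs "HOL-Real_Asymp.Real_Asymp"
begin

lemma nn_half_line:
  fixes b :: real assumes b: "b < -1"
  shows "(\<integral>\<^sup>+t. ennreal ((1+t) powr b) * indicator {0..} t \<partial>lborel) = ennreal (- 1/(b+1))"
proof -
  have "(\<integral>\<^sup>+t. ennreal ((1+t) powr b) * indicator {0..} t \<partial>lborel)
      = 0 - (1+0) powr (b+1)/(b+1)"
  proof (rule nn_integral_FTC_atLeast[where F="\<lambda>t. (1+t) powr (b+1)/(b+1)"])
    show "(\<lambda>t::real. (1+t) powr b) \<in> borel_measurable borel" by measurable
    fix x :: real assume x: "0 \<le> x"
    show "((\<lambda>t. (1+t) powr (b+1)/(b+1)) has_real_derivative (1+x) powr b) (at x)"
      using x b by (auto intro!: derivative_eq_intros)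
    show "0 \<le> (1+x) powr b" by simp
  next
    show "((\<lambda>t::real. (1+t) powr (b+1)/(b+1)) \<longlongrightarrow> 0) at_top"
      using b by real_asymp
  qed
  then show ?thesis by simp
qed

lemma nn_line:
  fixes b :: real assumes b: "b < -1"
  shows "(\<integral>\<^sup>+t. ennreal ((1+\<bar>t\<bar>) powr b) \<partial>lborel) < \<infinity>"
proof -
  define h where "h t = ennreal ((1+t) powr b) * indicator {0..} t" for t :: real
  have hm[measurable]: "h \<in> borel_measurable borel" unfolding h_def by measurable
  have "(\<integral>\<^sup>+t. ennreal ((1+\<bar>t\<bar>) powr b) \<partial>lborel) \<le> (\<integral>\<^sup>+t. h t + h (0 + (-1) * t) \<partial>lborel)"
    by (rule nn_integral_mono) (auto simp: h_def indicator_def)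
  also have "\<dots> = (\<integral>\<^sup>+t. h t \<partial>lborel) + (\<integral>\<^sup>+t. h (0 + (-1) * t) \<partial>lborel)"
    by (rule nn_integral_add) auto
  also have "(\<integral>\<^sup>+t. h (0 + (-1) * t) \<partial>lborel) = (\<integral>\<^sup>+t. h t \<partial>lborel)"
    using nn_integral_real_affine[OF hm, of "-1" 0] by simp
  also have "(\<integral>\<^sup>+t. h t \<partial>lborel) = ennreal (- 1/(b+1))"
    unfolding h_def by (rule nn_half_line[OF b])
  finally show ?thesis by (rule order.strict_trans1) simp
qed

definition U :: "real \<Rightarrow> real^'n::finite \<Rightarrow> real" where
  "U q x = (1 + (norm x)\<^sup>2) powr q"

lemma upos: "(0::real) < 1 + t^2" by (smt (verit) zero_le_power2)

lemma upos_ne[simp]: "1 + t^2 \<noteq> (0::real)" using upos[of t] by linarith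

lemma U_pos: "U q x > 0" unfolding U_def using upos by simp

lemma U_cont[continuous_intros]: "continuous_on A (U q)"
  unfolding U_def by (intro continuous_intros) auto

lemma U_meas[measurable]: "U q \<in> borel_measurable borel"
  by (intro borel_measurable_continuous_onI U_cont)

lemma U_bound_prod:
  fixes x :: "real^'n::finite"
  assumes q: "q \<le> 0"
  shows "U q x \<le> 2 powr (-q) * (\<Prod>b\<in>Basis. (1 + \<bar>x \<bullet> b\<bar>) powr (2*q/CARD('n)))"
proof -
  let ?d = "real CARD('n)"
  have d: "?d > 0" by simp
  have fb: "(1 + \<bar>x \<bullet> b\<bar>) powr (2*q/?d) \<ge> (2*(1 + (norm x)\<^sup>2)) powr (q/?d)" if b: "b \<in> Basis" for b
  proof -
    let ?a = "\<bar>x \<bullet> b\<bar>"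
    have an: "?a \<le> norm x" by (rule Basis_le_norm[OF b])
    have "?a^2 \<le> (norm x)^2" by (rule power_mono[OF an]) simp
    moreover have "(1 + ?a)^2 = 2*(1+?a^2) - (1-?a)^2" by (simp add: power2_eq_square algebra_simps)
    moreover have "0 \<le> (1-?a)^2" by simp
    ultimately have le: "(1 + ?a)^2 \<le> 2*(1 + (norm x)\<^sup>2)" by (smt (verit))
    have eq0: "(1 + ?a) powr (2*q/?d) = ((1 + ?a) powr 2) powr (q/?d)" by (simp add: powr_powr del: powr_numeral)
    have eq1: "(1 + ?a) powr 2 = (1 + ?a)^2" by (rule powr_numeral) simp
    have eq: "(1 + ?a) powr (2*q/?d) = ((1 + ?a)^2) powr (q/?d)" using eq0 by (simp only: eq1)
    have qd: "q/?d \<le> 0" using q d by (simp add: divide_nonpos_pos)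
    have pos: "0 < (1 + ?a)^2" by (simp add: add_pos_nonneg)
    show ?thesis unfolding eq using powr_mono2'[OF qd pos le] .
  qed
  have "(\<Prod>b\<in>(Basis::(real^'n) set). (2*(1 + (norm x)\<^sup>2)) powr (q/?d)) = ((2*(1 + (norm x)\<^sup>2)) powr (q/?d)) ^ CARD('n)"
    by simp
  also have "\<dots> = (2*(1 + (norm x)\<^sup>2)) powr q"
  proof -
    have h: "2*(1 + (norm x)\<^sup>2) \<noteq> 0" by (smt (verit) upos)
    show ?thesis using powr_power[OF h, of "q/?d" "CARD('n)"] by simp
  qed
  also have "\<dots> = 2 powr q * U q x" unfolding U_def by (rule powr_mult)
  finally have "2 powr q * U q x \<le> (\<Prod>b\<in>Basis. (1 + \<bar>x \<bullet> b\<bar>) powr (2*q/CARD('n)))"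
    using prod_mono[of "Basis::(real^'n) set" "\<lambda>b. (2*(1 + (norm x)\<^sup>2)) powr (q/?d)"] fb
    by (metis (no_types, lifting) powr_ge_zero)
  hence "2 powr (-q) * (2 powr q * U q x) \<le> 2 powr (-q) * (\<Prod>b\<in>Basis. (1 + \<bar>x \<bullet> b\<bar>) powr (2*q/CARD('n)))"
    by (simp add: mult_left_mono)
  moreover have "2 powr (-q) * (2 powr q * U q x) = U q x"
    by (simp add: mult.assoc[symmetric] powr_add[symmetric])
  ultimately show ?thesis by simp
qed

lemma U_integrable:
  assumes q: "q < - real CARD('n) / 2"
  shows "integrable lborel (U q :: real^'n::finite \<Rightarrow> real)"
proof (rule integrableI_bounded)
  show "U q \<in> borel_measurable lborel" by simp
  let ?d = "real CARD('n)"
  have "- real CARD('n) / 2 \<le> 0" by simp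
  hence q0: "q \<le> 0" using q by linarith
  have e: "2*q/?d < -1" using q by (simp add: field_simps)
  have "(\<integral>\<^sup>+x. ennreal (norm (U q (x::real^'n))) \<partial>lborel) \<le>
        (\<integral>\<^sup>+x. ennreal (2 powr (-q)) * (\<Prod>b\<in>Basis. ennreal ((1 + \<bar>x \<bullet> b\<bar>) powr (2*q/?d))) \<partial>(lborel::(real^'n) measure))"
  proof (rule nn_integral_mono)
    fix x :: "real^'n" assume "x \<in> space lborel"
    have "ennreal (2 powr (-q)) * (\<Prod>b\<in>Basis. ennreal ((1 + \<bar>x \<bullet> b\<bar>) powr (2*q/?d)))
       = ennreal (2 powr (-q) * (\<Prod>b\<in>Basis. (1 + \<bar>x \<bullet> b\<bar>) powr (2*q/?d)))"
      by (simp add: prod_ennreal ennreal_mult prod_nonneg)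
    moreover have "norm (U q x) = U q x" using U_pos[of q x] by simp
    ultimately show "ennreal (norm (U q x)) \<le> ennreal (2 powr (-q)) * (\<Prod>b\<in>Basis. ennreal ((1 + \<bar>x \<bullet> b\<bar>) powr (2*q/?d)))"
      using U_bound_prod[OF q0, of x] by (simp add: ennreal_leI)
  qed
  also have "\<dots> = ennreal (2 powr (-q)) * (\<integral>\<^sup>+x. (\<Prod>b\<in>Basis. ennreal ((1 + \<bar>x \<bullet> b\<bar>) powr (2*q/?d))) \<partial>(lborel::(real^'n) measure))"
    by (rule nn_integral_cmult) measurable
  finally have A: "(\<integral>\<^sup>+x. ennreal (norm (U q (x::real^'n))) \<partial>lborel) \<le> ennreal (2 powr (-q)) * (\<integral>\<^sup>+x. (\<Prod>b\<in>Basis. ennreal ((1 + \<bar>x \<bullet> b\<bar>) powr (2*q/?d))) \<partial>(lborel::(real^'n) measure))" .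
  have "(\<integral>\<^sup>+x. (\<Prod>b\<in>Basis. ennreal ((1 + \<bar>x \<bullet> b\<bar>) powr (2*q/?d))) \<partial>(lborel::(real^'n) measure))
      = (\<Prod>b\<in>(Basis::(real^'n) set). (\<integral>\<^sup>+t. ennreal ((1 + \<bar>t\<bar>) powr (2*q/?d)) \<partial>lborel))"
    by (rule nn_integral_lborel_prod[where f="\<lambda>b t. ennreal ((1 + \<bar>t\<bar>) powr (2*q/?d))"]) auto
  also have "\<dots> < \<infinity>" using nn_line[OF e] by (simp add: less_top[symmetric] ennreal_prod_eq_top power_eq_top_ennreal)
  finally have B: "(\<integral>\<^sup>+x. (\<Prod>b\<in>Basis. ennreal ((1 + \<bar>x \<bullet> b\<bar>) powr (2*q/?d))) \<partial>(lborel::(real^'n) measure)) < \<infinity>" .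
  show "(\<integral>\<^sup>+x. ennreal (norm (U q (x::real^'n))) \<partial>lborel) < \<infinity>"
  proof -
    have C: "ennreal (2 powr (-q)) * (\<integral>\<^sup>+x. (\<Prod>b\<in>Basis. ennreal ((1 + \<bar>x \<bullet> b\<bar>) powr (2*q/?d))) \<partial>(lborel::(real^'n) measure)) < \<infinity>"
      using B by (simp add: ennreal_mult_less_top)
    show ?thesis using order.strict_trans1[OF A C] .
  qed
qed

definition LD :: "'n::finite \<Rightarrow> (real^'n \<Rightarrow> real) \<Rightarrow> (real^'n \<Rightarrow> real) \<Rightarrow> bool" where
  "LD i F F' \<longleftrightarrow> (\<forall>y. ((\<lambda>t. F (y + t *\<^sub>R axis i 1)) has_real_derivative F' y) (at 0))"

lemma LD_pdiff: "LD i F F' \<Longrightarrow> pdiff i F y = F' y"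
  unfolding LD_def pdiff_def
  by (metis has_real_derivative_iff_has_vector_derivative vector_derivative_at)

lemma LD_pdiff_fun: "LD i F F' \<Longrightarrow> pdiff i F = F'"
  using LD_pdiff by blast

lemma LD_at:
  assumes "LD i F F'"
  shows "((\<lambda>t. F (x + t *\<^sub>R axis i 1)) has_real_derivative F' (x + s *\<^sub>R axis i 1)) (at s)"
proof -
  have "((\<lambda>u. F ((x + s *\<^sub>R axis i 1) + u *\<^sub>R axis i 1)) has_real_derivative F' (x + s *\<^sub>R axis i 1)) (at (s + -s))"
    using assms unfolding LD_def by simp
  hence "((\<lambda>t. F ((x + s *\<^sub>R axis i 1) + (t + -s) *\<^sub>R axis i 1)) has_real_derivative F' (x + s *\<^sub>R axis i 1)) (at s)"
    using DERIV_shift[of "\<lambda>u. F ((x + s *\<^sub>R axis i 1) + u *\<^sub>R axis i 1)"] by blast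
  moreover have "(\<lambda>t. F ((x + s *\<^sub>R axis i 1) + (t + -s) *\<^sub>R axis i 1)) = (\<lambda>t. F (x + t *\<^sub>R axis i 1))"
    by (rule ext) (simp add: algebra_simps)
  ultimately show ?thesis by simp
qed

lemma LD_add: "LD i F F' \<Longrightarrow> LD i G G' \<Longrightarrow> LD i (\<lambda>x. F x + G x) (\<lambda>x. F' x + G' x)"
  unfolding LD_def by (auto intro!: derivative_eq_intros)

lemma LD_diff: "LD i F F' \<Longrightarrow> LD i G G' \<Longrightarrow> LD i (\<lambda>x. F x - G x) (\<lambda>x. F' x - G' x)"
  unfolding LD_def by (auto intro!: derivative_eq_intros)

lemma LD_mult: "LD i F F' \<Longrightarrow> LD i G G' \<Longrightarrow> LD i (\<lambda>x. F x * G x) (\<lambda>x. F' x * G x + F x * G' x)"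
  unfolding LD_def by (auto intro!: derivative_eq_intros)

lemma LD_cmult: "LD i F F' \<Longrightarrow> LD i (\<lambda>x. c * F x) (\<lambda>x. c * F' x)"
  unfolding LD_def by (auto intro!: derivative_eq_intros)

lemma LD_const: "LD i (\<lambda>x. c) (\<lambda>x. 0)"
  unfolding LD_def by (auto intro!: derivative_eq_intros)

lemma LD_coord: "LD i (\<lambda>x. x $ i) (\<lambda>x. 1)"
  unfolding LD_def by (auto intro!: derivative_eq_intros)

lemma LD_cong: "LD i F F' \<Longrightarrow> (\<And>x. F' x = G' x) \<Longrightarrow> LD i F G'"
  unfolding LD_def by simp

lemma norm_line: "(norm (y + t *\<^sub>R axis i (1::real)))\<^sup>2 = (norm y)\<^sup>2 + 2*t*(y$i) + t\<^sup>2"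
proof -
  have "(norm (y + t *\<^sub>R axis i (1::real)))\<^sup>2 = (y + t *\<^sub>R axis i 1) \<bullet> (y + t *\<^sub>R axis i 1)"
    by (rule power2_norm_eq_inner)
  also have "\<dots> = y \<bullet> y + 2*t*(y \<bullet> axis i 1) + t\<^sup>2 * (axis i 1 \<bullet> axis i (1::real))"
    by (simp add: inner_add_left inner_add_right inner_commute algebra_simps power2_eq_square)
  also have "y \<bullet> y = (norm y)\<^sup>2" by (simp add: power2_norm_eq_inner)
  also have "y \<bullet> axis i 1 = y $ i" by (simp add: inner_axis)
  also have "axis i 1 \<bullet> axis i (1::real) = 1" by (simp add: inner_axis)
  finally show ?thesis by simp
qed

lemma LD_U: "LD i (U q) (\<lambda>y. 2*q*(y$i) * U (q-1) y)"
  unfolding LD_def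
proof
  fix y :: "real^'a"
  have e: "(\<lambda>t. U q (y + t *\<^sub>R axis i 1)) = (\<lambda>t. (1 + ((norm y)\<^sup>2 + 2*t*(y$i) + t\<^sup>2)) powr q)"
    unfolding U_def norm_line ..
  have "((\<lambda>t. (1 + ((norm y)\<^sup>2 + 2*t*(y$i) + t\<^sup>2)) powr q) has_real_derivative
         q * (1 + ((norm y)\<^sup>2 + 2*0*(y$i) + 0\<^sup>2)) powr (q - 1) * (2*(y$i))) (at 0)"
    using upos[of "norm y"]
    by (auto intro!: derivative_eq_intros simp: algebra_simps)
  thus "((\<lambda>t. U q (y + t *\<^sub>R axis i 1)) has_real_derivative 2*q*(y$i) * U (q-1) y) (at 0)"
    unfolding U_def by (simp add: norm_line algebra_simps)
qed

lemma lin3: "0 \<le> (A::real) \<Longrightarrow> (R::real) \<le> P \<Longrightarrow> P = 2*A + 2 - Q \<Longrightarrow> 0 \<le> Q \<Longrightarrow> (1 + R)/3 \<le> 1 + A" by (auto simp: field_simps)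

lemma U_shift:
  fixes x :: "real^'n::finite"
  assumes z: "\<bar>z\<bar> \<le> 1" and q: "q \<le> 0"
  shows "U q (x + z *\<^sub>R axis i 1) \<le> 3 powr (-q) * U q x"
proof -
  let ?a = "norm (x + z *\<^sub>R axis i 1)" and ?r = "norm x"
  have "?r \<le> ?a + norm (z *\<^sub>R axis i (1::real))"
    using norm_triangle_ineq4[of "x + z *\<^sub>R axis i 1" "z *\<^sub>R axis i 1"] by simp
  hence r: "?r \<le> ?a + 1" using z by simp
  have f1: "?r^2 \<le> (?a + 1)^2" by (rule power_mono[OF r]) simp
  have f2: "(?a+1)^2 = 2*?a^2 + 2 - (?a - 1)^2" by (simp add: power2_eq_square algebra_simps)
  have f3: "0 \<le> (?a - 1)^2" by simp
  have f0: "0 \<le> ?a^2" by simp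
  have le: "(1 + ?r^2)/3 \<le> 1 + ?a^2" by (rule lin3[OF f0 f1 f2 f3])
  have pos: "0 < (1 + ?r^2)/3" using upos[of ?r] by simp
  have "U q (x + z *\<^sub>R axis i 1) = (1 + ?a^2) powr q" unfolding U_def ..
  also have "\<dots> \<le> ((1 + ?r^2)/3) powr q" by (rule powr_mono2'[OF q pos le])
  also have "\<dots> = 3 powr (-q) * U q x" unfolding U_def
    by (subst powr_divide) (simp_all add: powr_minus divide_inverse mult_ac)
  finally show ?thesis .
qed

lemma integral_translate:
  fixes F :: "real^'n::finite \<Rightarrow> real"
  assumes [measurable]: "F \<in> borel_measurable borel"
  shows "integral\<^sup>L lborel (\<lambda>x. F (c + x)) = integral\<^sup>L lborel F"
    and "integrable lborel F \<Longrightarrow> integrable lborel (\<lambda>x. F (c + x))"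
proof -
  have d: "distr lborel borel ((+) c) = (lborel :: (real^'n) measure)" by (rule lborel_distr_plus)
  have "integral\<^sup>L (distr lborel borel ((+) c)) F = integral\<^sup>L lborel (\<lambda>x. F (c + x))"
    by (rule integral_distr) auto
  thus "integral\<^sup>L lborel (\<lambda>x. F (c + x)) = integral\<^sup>L lborel F" using d by simp
  assume "integrable lborel F"
  hence "integrable (distr lborel borel ((+) c)) F" using d by simp
  thus "integrable lborel (\<lambda>x. F (c + x))"
    by (subst (asm) integrable_distr_eq) auto
qed

lemma LD_int_zero:
  fixes F F' :: "real^'n::finite \<Rightarrow> real"
  assumes LD: "LD i F F'" and cF: "continuous_on UNIV F" and cF': "continuous_on UNIV F'"
    and iF: "integrable lborel F" and q: "q < - real CARD('n)/2"
    and bd: "\<And>y. \<bar>F' y\<bar> \<le> C * U q y"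
  shows "integral\<^sup>L lborel F' = 0"
proof -
  let ?e = "axis i (1::real)"
  define t where "t n = inverse (real (Suc n))" for n::nat
  define s where "s n x = (F (t n *\<^sub>R ?e + x) - F x) / t n" for n x
  have t_pos: "t n > 0" for n unfolding t_def by simp
  have t_le: "t n \<le> 1" for n unfolding t_def by (simp add: field_simps)
  have "- real CARD('n) / 2 \<le> 0" by simp
  hence q0: "q \<le> 0" using q by linarith
  have Fm[measurable]: "F \<in> borel_measurable borel" by (rule borel_measurable_continuous_onI[OF cF])
  have F'm[measurable]: "F' \<in> borel_measurable borel" by (rule borel_measurable_continuous_onI[OF cF'])
  have C0: "C \<ge> 0"
  proof -
    have "0 \<le> C * U q (0::real^'n)" using order_trans[OF abs_ge_zero bd[of 0]] .
    thus ?thesis using U_pos[of q "0::real^'n"] by (simp add: zero_le_mult_iff)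
  qed
  have sm[measurable]: "s n \<in> borel_measurable lborel" for n unfolding s_def by measurable
  have s_int: "integral\<^sup>L lborel (s n) = 0" for n
  proof -
    have i1: "integrable lborel (\<lambda>x. F (t n *\<^sub>R ?e + x))" by (rule integral_translate(2)[OF Fm iF])
    have "integral\<^sup>L lborel (s n) = (integral\<^sup>L lborel (\<lambda>x. F (t n *\<^sub>R ?e + x)) - integral\<^sup>L lborel F) / t n"
      unfolding s_def by (simp add: Bochner_Integration.integral_diff[OF i1 iF])
    also have "\<dots> = 0" by (simp add: integral_translate(1)[OF Fm])
    finally show ?thesis .
  qed
  have lim: "(\<lambda>n. s n x) \<longlonglongrightarrow> F' x" for x
  proof -
    have D: "((\<lambda>u. F (x + u *\<^sub>R ?e)) has_real_derivative F' x) (at 0)" using LD unfolding LD_def by blast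
    hence "((\<lambda>h. (F (x + (0 + h) *\<^sub>R ?e) - F (x + 0 *\<^sub>R ?e)) / h) \<longlongrightarrow> F' x) (at 0)"
      unfolding DERIV_def by simp
    hence L: "((\<lambda>h. (F (h *\<^sub>R ?e + x) - F x) / h) \<longlongrightarrow> F' x) (at 0)" by (simp add: add.commute)
    have tl: "filterlim t (at 0) sequentially"
      unfolding filterlim_at t_def using LIMSEQ_inverse_real_of_nat by (auto simp del: of_nat_Suc)
    show ?thesis using filterlim_compose[OF L tl] unfolding s_def comp_def by simp
  qed
  have dom: "\<bar>s n x\<bar> \<le> C * 3 powr (-q) * U q x" for n x
  proof -
    have "\<exists>z. 0 < z \<and> z < t n \<and> F (x + t n *\<^sub>R ?e) - F (x + 0 *\<^sub>R ?e) = (t n - 0) * F' (x + z *\<^sub>R ?e)"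
      by (rule MVT2[OF t_pos]) (rule LD_at[OF LD])
    then obtain z where z: "0 < z" "z < t n" "F (x + t n *\<^sub>R ?e) - F x = t n * F' (x + z *\<^sub>R ?e)" by auto
    have "s n x = F' (x + z *\<^sub>R ?e)" unfolding s_def using z(3) t_pos[of n] by (simp add: add.commute)
    hence "\<bar>s n x\<bar> \<le> C * U q (x + z *\<^sub>R ?e)" using bd by simp
    also have "\<dots> \<le> C * (3 powr (-q) * U q x)"
      by (rule mult_left_mono[OF U_shift C0]) (use z t_le[of n] q0 in auto)
    finally show ?thesis by (simp add: mult.assoc)
  qed
  have wi: "integrable lborel (\<lambda>x::real^'n. C * 3 powr (-q) * U q x)"
    using U_integrable[OF q] by (intro integrable_mult_right) simp
  have "(\<lambda>n. integral\<^sup>L lborel (s n)) \<longlonglongrightarrow> integral\<^sup>L lborel F'"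
    by (rule integral_dominated_convergence[OF _ sm wi]) (measurable, use lim dom in auto)
  hence "(\<lambda>n. 0::real) \<longlonglongrightarrow> integral\<^sup>L lborel F'" using s_int by simp
  thus ?thesis using LIMSEQ_unique[OF tendsto_const] by metis
qed

lemma LD_hvd: "LD i F F' \<Longrightarrow>
   ((\<lambda>t. c * complex_of_real (F (y + t *\<^sub>R axis i 1))) has_vector_derivative c * of_real (F' y)) (at 0)"
  unfolding LD_def
  by (metis bounded_linear.has_vector_derivative[OF bounded_linear_mult_right] has_vector_derivative_of_real)

lemma LD_pdiff_c: "LD i F F' \<Longrightarrow> pdiff i (\<lambda>x. c * complex_of_real (F x)) y = c * of_real (F' y)"
  unfolding pdiff_def using LD_hvd vector_derivative_at by blast

lemma LD_pdiff_of_real: "LD i F F' \<Longrightarrow> pdiff i (\<lambda>x. complex_of_real (F x)) y = of_real (F' y)"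
  using LD_pdiff_c[of i F F' 1] by simp

lemma LD_diffble_of_real: "LD i F F' \<Longrightarrow> (\<lambda>t. complex_of_real (F (y + t *\<^sub>R axis i 1))) differentiable (at 0)"
  using LD_hvd[of i F F' 1 y] by (auto intro: differentiableI_vector)

lemma schwartz_LD:
  assumes "schwartz f"
  shows "LD i (\<lambda>y. Re (pd_iter is f y)) (\<lambda>y. Re (pd_iter (i # is) f y))"
  unfolding LD_def
proof
  fix y
  have "(\<lambda>t. pd_iter is f (y + t *\<^sub>R axis i 1)) differentiable (at 0)"
    using assms unfolding schwartz_def by blast
  hence "((\<lambda>t. pd_iter is f (y + t *\<^sub>R axis i 1)) has_vector_derivative
          vector_derivative (\<lambda>t. pd_iter is f (y + t *\<^sub>R axis i 1)) (at 0)) (at 0)"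
    using vector_derivative_works by blast
  hence "((\<lambda>t. Re (pd_iter is f (y + t *\<^sub>R axis i 1))) has_real_derivative
          Re (vector_derivative (\<lambda>t. pd_iter is f (y + t *\<^sub>R axis i 1)) (at 0))) (at 0)"
    by (rule has_field_derivative_Re)
  thus "((\<lambda>t. Re (pd_iter is f (y + t *\<^sub>R axis i 1))) has_real_derivative Re (pd_iter (i # is) f y)) (at 0)"
    by (simp add: pdiff_def)
qed

lemma schwartz_cont: "schwartz f \<Longrightarrow> continuous_on UNIV (\<lambda>y. Re (pd_iter is f y))"
  unfolding schwartz_def by (auto intro: continuous_intros)

lemma U_neg_nat: "U (- real k) x = inverse ((1 + (norm x)\<^sup>2) ^ k)"
  unfolding U_def using upos[of "norm x"] by (simp add: powr_minus powr_realpow)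

lemma schwartz_bound:
  fixes f :: "real^'n::finite \<Rightarrow> complex"
  assumes "schwartz f"
  shows "\<exists>B\<ge>0. \<forall>x. \<bar>Re (pd_iter is f x)\<bar> \<le> B * U (- real CARD('n)) x"
proof -
  let ?N = "2 * CARD('n)"
  have "bounded (range (\<lambda>x. ((1 + norm x) ^ ?N) *\<^sub>R pd_iter is f x))"
    using assms unfolding schwartz_def by blast
  then obtain B where B: "\<And>x. norm (((1 + norm x) ^ ?N) *\<^sub>R pd_iter is f x) \<le> B"
    unfolding bounded_iff by blast
  have B0: "B \<ge> 0" using B[of 0] norm_ge_zero order_trans by blast
  have "\<bar>Re (pd_iter is f x)\<bar> \<le> B * U (- real CARD('n)) x" for x
  proof -
    have p1: "0 < (1 + (norm x)\<^sup>2) ^ CARD('n)" using upos[of "norm x"] by simp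
    have le1: "(1 + (norm x)\<^sup>2) ^ CARD('n) \<le> (1 + norm x) ^ ?N"
    proof -
      have "1 + (norm x)\<^sup>2 \<le> (1 + norm x)^2" by (simp add: power2_eq_square algebra_simps)
      hence "(1 + (norm x)\<^sup>2) ^ CARD('n) \<le> ((1 + norm x)^2) ^ CARD('n)"
        by (rule power_mono) simp
      thus ?thesis by (simp add: power_mult)
    qed
    have "(1 + norm x) ^ ?N * cmod (pd_iter is f x) \<le> B" using B[of x] by simp
    hence "(1 + (norm x)\<^sup>2) ^ CARD('n) * cmod (pd_iter is f x) \<le> B"
      by (rule order_trans[rotated]) (rule mult_right_mono[OF le1], simp)
    hence "cmod (pd_iter is f x) \<le> B * inverse ((1 + (norm x)\<^sup>2) ^ CARD('n))"
      using p1 by (simp add: field_simps)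
    moreover have "\<bar>Re (pd_iter is f x)\<bar> \<le> cmod (pd_iter is f x)" by (rule abs_Re_le_cmod)
    ultimately show ?thesis by (simp add: U_neg_nat)
  qed
  thus ?thesis using B0 by blast
qed

lemma U_add: "U a x * U b x = U (a + b) x"
  unfolding U_def by (simp add: powr_add)

lemma U_succ: "U (q + 1) x = (1 + (norm x)\<^sup>2) * U q x"
  unfolding U_def using upos[of "norm x"] by (simp add: powr_add mult.commute)

lemma U_le_1: "q \<le> 0 \<Longrightarrow> U q x \<le> 1"
proof -
  assume q: "q \<le> 0"
  have "(1 + (norm x)\<^sup>2) powr q \<le> (1 + (norm x)\<^sup>2) powr 0" by (rule powr_mono[OF q]) simp
  thus ?thesis unfolding U_def by simp
qed

lemma U_mono: "a \<le> b \<Longrightarrow> U a x \<le> U b x"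
  unfolding U_def by (rule powr_mono) simp_all

lemma norm_sq_sum: "(norm x)\<^sup>2 = (\<Sum>i\<in>UNIV. (x $ i)\<^sup>2)" for x :: "real^'n::finite"
  unfolding power2_norm_eq_inner inner_vec_def by (simp add: power2_eq_square)

lemma coord_sq_le: "(x $ i)\<^sup>2 \<le> (norm x)\<^sup>2" for x :: "real^'n::finite"
  using power_mono[OF component_le_norm_cart[of x i] abs_ge_zero, of 2] by simp

lemma coord_abs_le: "\<bar>x $ i\<bar> \<le> 1 + (norm x)\<^sup>2" for x :: "real^'n::finite"
proof -
  have "\<bar>x $ i\<bar> \<le> 1 + (x $ i)\<^sup>2"
  proof -
    have "0 \<le> (\<bar>x $ i\<bar> - 1/2)^2" by simp
    moreover have "(\<bar>x $ i\<bar> - 1/2)^2 = (x $ i)^2 - \<bar>x $ i\<bar> + 1/4"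
      by (simp add: power2_eq_square algebra_simps abs_mult_self_eq)
    ultimately show ?thesis by linarith
  qed
  thus ?thesis using coord_sq_le[of x i] by linarith
qed

lemma coord_sq_U: "(x $ i)\<^sup>2 * U q x \<le> U (q + 1) x" for x :: "real^'n::finite"
proof -
  have "(x $ i)\<^sup>2 * U q x \<le> (1 + (norm x)\<^sup>2) * U q x"
    using coord_sq_le[of x i] U_pos[of q x] by (intro mult_right_mono) auto
  thus ?thesis by (simp add: U_succ)
qed

lemma coord_abs_U: "\<bar>x $ i\<bar> * U q x \<le> U (q + 1) x" for x :: "real^'n::finite"
proof -
  have "\<bar>x $ i\<bar> * U q x \<le> (1 + (norm x)\<^sup>2) * U q x"
    using coord_abs_le[of x i] U_pos[of q x] by (intro mult_right_mono) auto
  thus ?thesis by (simp add: U_succ)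
qed

lemma integrable_of_bound:
  fixes g :: "real^'n::finite \<Rightarrow> real"
  assumes "continuous_on UNIV g" "\<And>x. \<bar>g x\<bar> \<le> B * U q x" "q < - real CARD('n) / 2"
  shows "integrable lborel g"
proof (rule Bochner_Integration.integrable_bound)
  show "integrable lborel (\<lambda>x::real^'n. B * U q x)" using U_integrable[OF assms(3)] by (intro integrable_mult_right) simp
  show "g \<in> borel_measurable lborel" using borel_measurable_continuous_onI[OF assms(1)] by simp
  show "AE x in lborel. norm (g x) \<le> norm (B * U q x)"
    using assms(2) by (auto intro: order_trans[OF _ abs_ge_self])
qed

lemma IBP:
  fixes F G F' G' :: "real^'n::finite \<Rightarrow> real"
  assumes LF: "LD i F F'" and LG: "LD i G G'"
    and c: "continuous_on UNIV F" "continuous_on UNIV G" "continuous_on UNIV F'" "continuous_on UNIV G'"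
    and b0: "\<And>x. \<bar>F x * G x\<bar> \<le> A * U q0 x"
    and b1: "\<And>x. \<bar>F' x * G x\<bar> \<le> B1 * U q x"
    and b2: "\<And>x. \<bar>F x * G' x\<bar> \<le> B2 * U q x"
    and q: "q0 < - real CARD('n) / 2" "q < - real CARD('n) / 2"
  shows "integral\<^sup>L lborel (\<lambda>x. F' x * G x) = - integral\<^sup>L lborel (\<lambda>x. F x * G' x)"
    and "integrable lborel (\<lambda>x. F' x * G x)" and "integrable lborel (\<lambda>x. F x * G' x)"
proof -
  show i1: "integrable lborel (\<lambda>x. F' x * G x)"
    by (rule integrable_of_bound[OF _ b1 q(2)]) (intro continuous_intros c)
  show i2: "integrable lborel (\<lambda>x. F x * G' x)"
    by (rule integrable_of_bound[OF _ b2 q(2)]) (intro continuous_intros c)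
  have "integral\<^sup>L lborel (\<lambda>x. F' x * G x + F x * G' x) = 0"
  proof (rule LD_int_zero[OF LD_mult[OF LF LG] _ _ _ q(2)])
    show "continuous_on UNIV (\<lambda>x. F x * G x)" by (intro continuous_intros c)
    show "continuous_on UNIV (\<lambda>x. F' x * G x + F x * G' x)" by (intro continuous_intros c)
    show "integrable lborel (\<lambda>x. F x * G x)"
      by (rule integrable_of_bound[OF _ b0 q(1)]) (intro continuous_intros c)
    fix y
    show "\<bar>F' y * G y + F y * G' y\<bar> \<le> (B1 + B2) * U q y"
    proof -
      have "(B1 + B2) * U q y = B1 * U q y + B2 * U q y" by (simp add: distrib_right)
      thus ?thesis using abs_triangle_ineq[of "F' y * G y" "F y * G' y"] b1[of y] b2[of y] by linarith
    qed
  qed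
  thus "integral\<^sup>L lborel (\<lambda>x. F' x * G x) = - integral\<^sup>L lborel (\<lambda>x. F x * G' x)"
    using Bochner_Integration.integral_add[OF i1 i2] by simp
qed

definition Wf :: "real \<Rightarrow> real \<Rightarrow> real^'n::finite \<Rightarrow> real" where
  "Wf c p x = c * U p x"
definition dWf :: "real \<Rightarrow> real \<Rightarrow> 'n::finite \<Rightarrow> real^'n \<Rightarrow> real" where
  "dWf c p i x = c * (2*p*(x$i) * U (p-1) x)"
definition ddWf :: "real \<Rightarrow> real \<Rightarrow> 'n::finite \<Rightarrow> real^'n \<Rightarrow> real" where
  "ddWf c p i x = c * (2*p*(U (p-1) x + (x$i) * (2*(p-1)*(x$i)*U (p-2) x)))"

lemma LD_cong_fun: "LD i F F' \<Longrightarrow> (\<And>x. F x = G x) \<Longrightarrow> LD i G F'"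
proof -
  assume "LD i F F'" "\<And>x. F x = G x"
  moreover hence "F = G" by auto
  ultimately show ?thesis by simp
qed

lemma LD_W: "LD i (Wf c p) (dWf c p i)"
  unfolding Wf_def dWf_def by (intro LD_cmult LD_U)

lemma LD_dW: "LD i (dWf c p i) (ddWf c p i)"
proof -
  have "LD i (\<lambda>x. c * (2*p) * (x$i * U (p-1) x)) (\<lambda>x. c * (2*p) * (1 * U (p-1) x + x$i * (2*(p-1)*(x$i)*U (p-1-1) x)))"
    by (intro LD_cmult LD_mult LD_coord LD_U)
  hence "LD i (\<lambda>x. c * (2*p) * (x$i * U (p-1) x)) (ddWf c p i)"
    by (rule LD_cong) (simp add: ddWf_def algebra_simps)
  thus ?thesis by (rule LD_cong_fun) (simp add: dWf_def algebra_simps)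
qed

lemma pdiff_W: "pdiff i (Wf c p) = dWf c p i" by (rule LD_pdiff_fun[OF LD_W])
lemma pdiff_dW: "pdiff i (dWf c p i) = ddWf c p i" by (rule LD_pdiff_fun[OF LD_dW])

lemma cont_W: "continuous_on UNIV (Wf c p)" unfolding Wf_def by (intro continuous_intros)
lemma cont_dW: "continuous_on UNIV (dWf c p i)" unfolding dWf_def by (intro continuous_intros)
lemma cont_ddW: "continuous_on UNIV (ddWf c p i)" unfolding ddWf_def by (intro continuous_intros)

lemma lap_W:
  fixes x :: "real^'n::finite"
  assumes p: "p = - (real CARD('n) - 2) / 2"
  shows "lap (Wf c p) x = - 4 * p * (p-1) * c * U (p-2) x"
proof -
  let ?d = "real CARD('n)"
  have "lap (Wf c p) x = (\<Sum>i\<in>UNIV. ddWf c p i x)" unfolding lap_def pdiff_W pdiff_dW ..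
  also have "\<dots> = (\<Sum>i\<in>UNIV. c*(2*p)*U (p-1) x + (c*(2*p)*(2*(p-1))*U (p-2) x) * (x$i)\<^sup>2)"
    unfolding ddWf_def by (simp add: algebra_simps power2_eq_square)
  also have "\<dots> = ?d * (c*(2*p)*U (p-1) x) + (c*(2*p)*(2*(p-1))*U (p-2) x) * (norm x)\<^sup>2"
    by (simp add: sum.distrib sum_distrib_left norm_sq_sum)
  also have "U (p-1) x = (1 + (norm x)\<^sup>2) * U (p-2) x" using U_succ[of "p-2" x] by simp
  also have "?d = 2 - 2*p" using p by simp
  finally show ?thesis by (simp add: algebra_simps)
qed

lemma bound_W: "c \<ge> 0 \<Longrightarrow> \<bar>Wf c p x\<bar> \<le> c * U p x"
  unfolding Wf_def using U_pos[of p x] by (simp add: abs_mult)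

lemma bound_dW: "c \<ge> 0 \<Longrightarrow> \<bar>dWf c p i x\<bar> \<le> (2*\<bar>p\<bar>*c) * U p x"
proof -
  assume c: "c \<ge> 0"
  have "\<bar>dWf c p i x\<bar> = 2*\<bar>p\<bar>*c * (\<bar>x$i\<bar> * U (p-1) x)"
    unfolding dWf_def using U_pos[of "p-1" x] c by (simp add: abs_mult)
  also have "\<dots> \<le> 2*\<bar>p\<bar>*c * U (p - 1 + 1) x"
    using c by (intro mult_left_mono coord_abs_U) auto
  finally show ?thesis by simp
qed

lemma bound_ddW: "c \<ge> 0 \<Longrightarrow> \<bar>ddWf c p i x\<bar> \<le> (2*\<bar>p\<bar>*c*(1 + 2*\<bar>p-1\<bar>)) * U (p-1) x"
proof -
  assume c: "c \<ge> 0"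
  have h1: "\<bar>U (p-1) x + (x$i) * (2*(p-1)*(x$i)*U (p-2) x)\<bar> \<le> U (p-1) x + 2*\<bar>p-1\<bar>*((x$i)\<^sup>2 * U (p-2) x)"
  proof -
    have e: "\<bar>(x$i) * (2*(p-1)*(x$i)*U (p-2) x)\<bar> = 2*\<bar>p-1\<bar>*((x$i)\<^sup>2 * U (p-2) x)"
    proof -
      have a1: "\<bar>2*(p-1)\<bar> = 2*\<bar>p-1\<bar>" by (cases "p \<ge> 1") auto
      have r: "(x$i) * (2*(p-1)*(x$i)*U (p-2) x) = (2*(p-1)) * ((x$i)\<^sup>2 * U (p-2) x)"
        by (simp add: power2_eq_square mult_ac)
      have nn: "0 \<le> (x$i)\<^sup>2 * U (p-2) x" using U_pos[of "p-2" x] by simp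
      show ?thesis unfolding r by (simp only: abs_mult[of "2*(p-1)"] a1 abs_of_nonneg[OF nn])
    qed
    show ?thesis using abs_triangle_ineq[of "U (p-1) x" "(x$i) * (2*(p-1)*(x$i)*U (p-2) x)"] e U_pos[of "p-1" x]
      by simp
  qed
  moreover have "(x$i)\<^sup>2 * U (p-2) x \<le> U (p-1) x" using coord_sq_U[of x i "p-2"] by simp
  hence "2*\<bar>p-1\<bar>*((x$i)\<^sup>2 * U (p-2) x) \<le> 2*\<bar>p-1\<bar>*U (p-1) x" by (intro mult_left_mono) auto
  ultimately have h: "\<bar>U (p-1) x + (x$i) * (2*(p-1)*(x$i)*U (p-2) x)\<bar> \<le> (1 + 2*\<bar>p-1\<bar>) * U (p-1) x"
    by (simp add: algebra_simps)
  have "\<bar>ddWf c p i x\<bar> = 2*\<bar>p\<bar>*c * \<bar>U (p-1) x + (x$i) * (2*(p-1)*(x$i)*U (p-2) x)\<bar>"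
    unfolding ddWf_def using c by (simp add: abs_mult)
  also have "\<dots> \<le> 2*\<bar>p\<bar>*c * ((1 + 2*\<bar>p-1\<bar>) * U (p-1) x)"
    using c by (intro mult_left_mono h) auto
  finally show ?thesis by (simp add: mult.assoc)
qed

lemma prod_bound:
  assumes "\<bar>f\<bar> \<le> A * U a x" "\<bar>g\<bar> \<le> B * U b x" "A \<ge> 0"
  shows "\<bar>f * g\<bar> \<le> (A * B) * U (a + b) x"
proof -
  have "\<bar>f * g\<bar> = \<bar>f\<bar> * \<bar>g\<bar>" by (simp add: abs_mult)
  also have "\<dots> \<le> (A * U a x) * (B * U b x)"
    using assms U_pos[of a x] by (intro mult_mono) auto
  also have "\<dots> = (A * B) * U (a + b) x" by (simp add: U_add[symmetric] mult_ac)
  finally show ?thesis .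
qed

lemma bound_mono:
  assumes "\<bar>f\<bar> \<le> A * U a x" "a \<le> b" "A \<ge> 0"
  shows "\<bar>f\<bar> \<le> A * U b x"
  using assms(1) mult_left_mono[OF U_mono[OF assms(2), of x] assms(3)] by linarith

lemma prod_bound':
  assumes "\<bar>f\<bar> \<le> A * U a x" "\<bar>g\<bar> \<le> B * U b x" "A \<ge> 0" "B \<ge> 0" "a + b \<le> e"
  shows "\<bar>f * g\<bar> \<le> (A * B) * U e x"
  by (rule bound_mono[OF prod_bound[OF assms(1,2,3)] assms(5)]) (use assms(3,4) in simp)

context
  fixes c p :: real
  assumes c: "c \<ge> 0" and p: "p = - (real CARD('n::finite) - 2) / 2" and d5: "CARD('n) \<ge> 5"
begin

lemma p_facts: "p \<le> 0" "2*p < - real CARD('n) / 2" "- real CARD('n) < - real CARD('n) / 2"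
  using p d5 by (simp_all add: field_simps)

lemma W_W_ibp:
  "integral\<^sup>L lborel (\<lambda>x::real^'n. ddWf c p i x * Wf c p x) = - integral\<^sup>L lborel (\<lambda>x. dWf c p i x * dWf c p i x)"
  "integrable lborel (\<lambda>x::real^'n. ddWf c p i x * Wf c p x)"
  "integrable lborel (\<lambda>x::real^'n. dWf c p i x * dWf c p i x)"
proof -
  let ?K = "2*\<bar>p\<bar>*c"
  have Kn: "?K \<ge> 0" "2*\<bar>p\<bar>*c*(1 + 2*\<bar>p-1\<bar>) \<ge> 0" using c by auto
  have b0: "\<bar>dWf c p i x * Wf c p x\<bar> \<le> (?K * c) * U (2*p) x" for x :: "real^'n"
    by (rule prod_bound'[OF bound_dW[OF c] bound_W[OF c] Kn(1) c]) simp
  have b1: "\<bar>ddWf c p i x * Wf c p x\<bar> \<le> (2*\<bar>p\<bar>*c*(1 + 2*\<bar>p-1\<bar>) * c) * U (2*p) x" for x :: "real^'n"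
    by (rule prod_bound'[OF bound_ddW[OF c] bound_W[OF c] Kn(2) c]) simp
  have b2: "\<bar>dWf c p i x * dWf c p i x\<bar> \<le> (?K * ?K) * U (2*p) x" for x :: "real^'n"
    by (rule prod_bound'[OF bound_dW[OF c] bound_dW[OF c] Kn(1) Kn(1)]) simp
  note I = IBP[OF LD_dW LD_W cont_dW cont_W cont_ddW cont_dW b0 b1 b2 p_facts(2) p_facts(2)]
  show "integral\<^sup>L lborel (\<lambda>x::real^'n. ddWf c p i x * Wf c p x) = - integral\<^sup>L lborel (\<lambda>x. dWf c p i x * dWf c p i x)"
    "integrable lborel (\<lambda>x::real^'n. ddWf c p i x * Wf c p x)"
    "integrable lborel (\<lambda>x::real^'n. dWf c p i x * dWf c p i x)" using I by (auto simp only:)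
qed

lemma lapW_W:
  "integral\<^sup>L lborel (\<lambda>x::real^'n. lap (Wf c p) x * Wf c p x) = - (\<Sum>i\<in>UNIV. integral\<^sup>L lborel (\<lambda>x::real^'n. (dWf c p i x)\<^sup>2))"
proof -
  have "integral\<^sup>L lborel (\<lambda>x::real^'n. lap (Wf c p) x * Wf c p x)
      = integral\<^sup>L lborel (\<lambda>x::real^'n. \<Sum>i\<in>UNIV. ddWf c p i x * Wf c p x)"
    unfolding lap_def pdiff_W pdiff_dW by (simp add: sum_distrib_right)
  also have "\<dots> = (\<Sum>i\<in>UNIV. integral\<^sup>L lborel (\<lambda>x::real^'n. ddWf c p i x * Wf c p x))"
    by (rule Bochner_Integration.integral_sum[where f="\<lambda>i x. ddWf c p i x * Wf c p x"]) (rule W_W_ibp(2))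
  also have "\<dots> = - (\<Sum>i\<in>UNIV. integral\<^sup>L lborel (\<lambda>x::real^'n. (dWf c p i x)\<^sup>2))"
    by (simp add: W_W_ibp(1) power2_eq_square sum_negf)
  finally show ?thesis .
qed

end

context
  fixes c p :: real and Yp :: "real^'n::finite \<Rightarrow> complex"
  assumes c: "c \<ge> 0" and p: "p = - (real CARD('n::finite) - 2) / 2" and d5: "CARD('n) \<ge> 5"
    and S: "schwartz Yp"
begin

lemma LDY0: "LD i (\<lambda>y. Re (Yp y)) (\<lambda>y. Re (pdiff i Yp y))"
  using schwartz_LD[OF S, of i "[]"] by simp
lemma LDY1: "LD i (\<lambda>y. Re (pdiff i Yp y)) (\<lambda>y. Re (pdiff i (pdiff i Yp) y))"
  using schwartz_LD[OF S, of i "[i]"] by simp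
lemma contY0: "continuous_on UNIV (\<lambda>y. Re (Yp y))"
  using schwartz_cont[OF S, of "[]"] by simp
lemma contY1: "continuous_on UNIV (\<lambda>y. Re (pdiff i Yp y))"
  using schwartz_cont[OF S, of "[i]"] by simp
lemma contY2: "continuous_on UNIV (\<lambda>y. Re (pdiff i (pdiff i Yp) y))"
  using schwartz_cont[OF S, of "[i,i]"] by simp

lemma pfacts: "p \<le> 0" "- real CARD('n) < - real CARD('n) / 2"
  using p d5 by (simp_all add: field_simps)

lemma Y_W_ibp:
  "integral\<^sup>L lborel (\<lambda>x. Re (pdiff i (pdiff i Yp) x) * Wf c p x) = - integral\<^sup>L lborel (\<lambda>x. Re (pdiff i Yp x) * dWf c p i x)"
  "integrable lborel (\<lambda>x. Re (pdiff i (pdiff i Yp) x) * Wf c p x)"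
  "integrable lborel (\<lambda>x. Re (pdiff i Yp x) * dWf c p i x)"
proof -
  obtain B1 where B1: "B1 \<ge> 0" "\<And>x. \<bar>Re (pdiff i Yp x)\<bar> \<le> B1 * U (- real CARD('n)) x"
    using schwartz_bound[OF S, of "[i]"] by auto
  obtain B2 where B2: "B2 \<ge> 0" "\<And>x. \<bar>Re (pdiff i (pdiff i Yp) x)\<bar> \<le> B2 * U (- real CARD('n)) x"
    using schwartz_bound[OF S, of "[i,i]"] by auto
  have K: "2*\<bar>p\<bar>*c \<ge> 0" using c by simp
  have b0: "\<bar>Re (pdiff i Yp x) * Wf c p x\<bar> \<le> (B1 * c) * U (- real CARD('n)) x" for x
    by (rule prod_bound'[OF B1(2) bound_W[OF c] B1(1) c]) (use pfacts in simp)
  have b1: "\<bar>Re (pdiff i (pdiff i Yp) x) * Wf c p x\<bar> \<le> (B2 * c) * U (- real CARD('n)) x" for x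
    by (rule prod_bound'[OF B2(2) bound_W[OF c] B2(1) c]) (use pfacts in simp)
  have b2: "\<bar>Re (pdiff i Yp x) * dWf c p i x\<bar> \<le> (B1 * (2*\<bar>p\<bar>*c)) * U (- real CARD('n)) x" for x
    by (rule prod_bound'[OF B1(2) bound_dW[OF c] B1(1) K]) (use pfacts in simp)
  note I = IBP[OF LDY1 LD_W contY1 cont_W contY2 cont_dW b0 b1 b2 pfacts(2) pfacts(2)]
  show "integral\<^sup>L lborel (\<lambda>x. Re (pdiff i (pdiff i Yp) x) * Wf c p x) = - integral\<^sup>L lborel (\<lambda>x. Re (pdiff i Yp x) * dWf c p i x)"
    "integrable lborel (\<lambda>x. Re (pdiff i (pdiff i Yp) x) * Wf c p x)"
    "integrable lborel (\<lambda>x. Re (pdiff i Yp x) * dWf c p i x)" using I by (auto simp only:)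
qed

lemma W_Y_ibp:
  "integral\<^sup>L lborel (\<lambda>x. ddWf c p i x * Re (Yp x)) = - integral\<^sup>L lborel (\<lambda>x. dWf c p i x * Re (pdiff i Yp x))"
  "integrable lborel (\<lambda>x. ddWf c p i x * Re (Yp x))"
  "integrable lborel (\<lambda>x. dWf c p i x * Re (pdiff i Yp x))"
proof -
  obtain B0 where B0: "B0 \<ge> 0" "\<And>x. \<bar>Re (Yp x)\<bar> \<le> B0 * U (- real CARD('n)) x"
    using schwartz_bound[OF S, of "[]"] by auto
  obtain B1 where B1: "B1 \<ge> 0" "\<And>x. \<bar>Re (pdiff i Yp x)\<bar> \<le> B1 * U (- real CARD('n)) x"
    using schwartz_bound[OF S, of "[i]"] by auto
  have K: "2*\<bar>p\<bar>*c \<ge> 0" "2*\<bar>p\<bar>*c*(1 + 2*\<bar>p-1\<bar>) \<ge> 0" using c by simp_all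
  have b0: "\<bar>dWf c p i x * Re (Yp x)\<bar> \<le> ((2*\<bar>p\<bar>*c) * B0) * U (- real CARD('n)) x" for x
    by (rule prod_bound'[OF bound_dW[OF c] B0(2) K(1) B0(1)]) (use pfacts in simp)
  have b1: "\<bar>ddWf c p i x * Re (Yp x)\<bar> \<le> ((2*\<bar>p\<bar>*c*(1 + 2*\<bar>p-1\<bar>)) * B0) * U (- real CARD('n)) x" for x
    by (rule prod_bound'[OF bound_ddW[OF c] B0(2) K(2) B0(1)]) (use pfacts in simp)
  have b2: "\<bar>dWf c p i x * Re (pdiff i Yp x)\<bar> \<le> ((2*\<bar>p\<bar>*c) * B1) * U (- real CARD('n)) x" for x
    by (rule prod_bound'[OF bound_dW[OF c] B1(2) K(1) B1(1)]) (use pfacts in simp)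
  note I = IBP[OF LD_dW LDY0 cont_dW contY0 cont_ddW contY1 b0 b1 b2 pfacts(2) pfacts(2)]
  show "integral\<^sup>L lborel (\<lambda>x. ddWf c p i x * Re (Yp x)) = - integral\<^sup>L lborel (\<lambda>x. dWf c p i x * Re (pdiff i Yp x))"
    "integrable lborel (\<lambda>x. ddWf c p i x * Re (Yp x))"
    "integrable lborel (\<lambda>x. dWf c p i x * Re (pdiff i Yp x))" using I by (auto simp only:)
qed

lemma lapY_W:
  assumes H0: "integral\<^sup>L lborel (\<lambda>x. \<Sum>i\<in>UNIV. dWf c p i x * Re (pdiff i Yp x)) = 0"
  shows "integral\<^sup>L lborel (\<lambda>x. lap (\<lambda>y. Re (Yp y)) x * Wf c p x) = 0"
    and "integral\<^sup>L lborel (\<lambda>x. lap (Wf c p) x * Re (Yp x)) = 0"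
    and "integrable lborel (\<lambda>x. lap (\<lambda>y. Re (Yp y)) x * Wf c p x)"
    and "integrable lborel (\<lambda>x. lap (Wf c p) x * Re (Yp x))"
proof -
  have H: "(\<Sum>i\<in>UNIV. integral\<^sup>L lborel (\<lambda>x. dWf c p i x * Re (pdiff i Yp x))) = 0"
    using H0 Bochner_Integration.integral_sum[where f="\<lambda>i x. dWf c p i x * Re (pdiff i Yp x)" and M=lborel and I=UNIV]
      W_Y_ibp(3) by simp
  have l1: "lap (\<lambda>y. Re (Yp y)) x = (\<Sum>i\<in>UNIV. Re (pdiff i (pdiff i Yp) x))" for x
    unfolding lap_def LD_pdiff_fun[OF LDY0] LD_pdiff_fun[OF LDY1] ..
  have l2: "lap (Wf c p) x = (\<Sum>i\<in>UNIV. ddWf c p i x)" for x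
    unfolding lap_def pdiff_W pdiff_dW ..
  have e1: "(\<lambda>x. lap (\<lambda>y. Re (Yp y)) x * Wf c p x) = (\<lambda>x. \<Sum>i\<in>UNIV. Re (pdiff i (pdiff i Yp) x) * Wf c p x)"
    unfolding l1 by (simp add: sum_distrib_right)
  have e2: "(\<lambda>x. lap (Wf c p) x * Re (Yp x)) = (\<lambda>x. \<Sum>i\<in>UNIV. ddWf c p i x * Re (Yp x))"
    unfolding l2 by (simp add: sum_distrib_right)
  show "integrable lborel (\<lambda>x. lap (\<lambda>y. Re (Yp y)) x * Wf c p x)"
    unfolding e1 by (rule Bochner_Integration.integrable_sum) (rule Y_W_ibp(2))
  show "integrable lborel (\<lambda>x. lap (Wf c p) x * Re (Yp x))"
    unfolding e2 by (rule Bochner_Integration.integrable_sum) (rule W_Y_ibp(2))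
  have "integral\<^sup>L lborel (\<lambda>x. lap (\<lambda>y. Re (Yp y)) x * Wf c p x)
      = (\<Sum>i\<in>UNIV. integral\<^sup>L lborel (\<lambda>x. Re (pdiff i (pdiff i Yp) x) * Wf c p x))"
    unfolding e1 by (rule Bochner_Integration.integral_sum) (rule Y_W_ibp(2))
  also have "\<dots> = - (\<Sum>i\<in>UNIV. integral\<^sup>L lborel (\<lambda>x. dWf c p i x * Re (pdiff i Yp x)))"
  proof -
    have comm: "(\<lambda>x. dWf c p i x * Re (pdiff i Yp x)) = (\<lambda>x. Re (pdiff i Yp x) * dWf c p i x)" for i
      by (simp add: mult.commute)
    show ?thesis by (simp add: Y_W_ibp(1) sum_negf comm)
  qed
  finally show "integral\<^sup>L lborel (\<lambda>x. lap (\<lambda>y. Re (Yp y)) x * Wf c p x) = 0" using H by simp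
  have "integral\<^sup>L lborel (\<lambda>x. lap (Wf c p) x * Re (Yp x))
      = (\<Sum>i\<in>UNIV. integral\<^sup>L lborel (\<lambda>x. ddWf c p i x * Re (Yp x)))"
    unfolding e2 by (rule Bochner_Integration.integral_sum) (rule W_Y_ibp(2))
  also have "\<dots> = - (\<Sum>i\<in>UNIV. integral\<^sup>L lborel (\<lambda>x. dWf c p i x * Re (pdiff i Yp x)))"
    by (simp add: W_Y_ibp(1) sum_negf)
  finally show "integral\<^sup>L lborel (\<lambda>x. lap (Wf c p) x * Re (Yp x)) = 0" using H by simp
qed

end

lemma fubini_conv:
  fixes W Y :: "real^'n::finite \<Rightarrow> real"
  assumes cW: "continuous_on UNIV W" and cY: "continuous_on UNIV Y"
    and bW: "\<And>x. \<bar>W x\<bar> \<le> A"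
    and bY: "\<And>x. \<bar>Y x\<bar> \<le> B * U (- real CARD('n)) x" and B: "B \<ge> 0"
    and Vne: "\<And>y. conv4 (\<lambda>y. (W y)\<^sup>2) y \<noteq> 0"
    and Vb: "\<And>y. conv4 (\<lambda>y. (W y)\<^sup>2) y \<le> M"
  shows "integrable lborel (\<lambda>x. conv4 (\<lambda>y. W y * Y y) x * W x * W x)"
    and "integral\<^sup>L lborel (\<lambda>x. conv4 (\<lambda>y. W y * Y y) x * W x * W x)
         = integral\<^sup>L lborel (\<lambda>y. W y * Y y * conv4 (\<lambda>y. (W y)\<^sup>2) y)"
proof -
  let ?V = "conv4 (\<lambda>y. (W y)\<^sup>2)"
  have Wm[measurable]: "W \<in> borel_measurable borel" by (rule borel_measurable_continuous_onI[OF cW])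
  have Ym[measurable]: "Y \<in> borel_measurable borel" by (rule borel_measurable_continuous_onI[OF cY])
  define F where "F a b = W a * Y a * ((W b)\<^sup>2 / norm (a - b) ^ 4)" for a b :: "real^'n"
  have Fm[measurable]: "case_prod F \<in> borel_measurable (lborel \<Otimes>\<^sub>M lborel)"
    unfolding F_def by measurable
  have V_def': "?V a = (\<integral>b. (W b)\<^sup>2 / norm (a - b) ^ 4 \<partial>lborel)" for a
    unfolding conv4_def ..
  have Vint: "integrable lborel (\<lambda>b. (W b)\<^sup>2 / norm (a - b) ^ 4)" for a
    using Vne[of a] not_integrable_integral_eq unfolding V_def' by blast
  have V0: "?V a \<ge> 0" for a unfolding V_def' by (rule Bochner_Integration.integral_nonneg) simp
  have inner1: "(\<integral>b. F a b \<partial>lborel) = W a * Y a * ?V a" for a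
    unfolding F_def V_def' by (rule integral_mult_right_zero)
  have inner1n: "(\<integral>b. norm (F a b) \<partial>lborel) = \<bar>W a * Y a\<bar> * ?V a" for a
  proof -
    have "(\<lambda>b. norm (F a b)) = (\<lambda>b. \<bar>W a * Y a\<bar> * ((W b)\<^sup>2 / norm (a - b) ^ 4))"
      unfolding F_def by (simp add: abs_mult)
    thus ?thesis unfolding V_def' by (simp only: integral_mult_right_zero)
  qed
  have inner2: "(\<integral>a. F a b \<partial>lborel) = conv4 (\<lambda>y. W y * Y y) b * W b * W b" for b
  proof -
    have "(\<lambda>a. F a b) = (\<lambda>a. W a * Y a / norm (b - a) ^ 4 * (W b * W b))"
      unfolding F_def by (simp add: norm_minus_commute power2_eq_square)
    hence "(\<integral>a. F a b \<partial>lborel) = (\<integral>a. W a * Y a / norm (b - a) ^ 4 \<partial>lborel) * (W b * W b)"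
      by (simp only: integral_mult_left_zero)
    thus ?thesis unfolding conv4_def by (simp only: mult.assoc)
  qed
  have A0: "A \<ge> 0" using bW[of 0] abs_ge_zero order_trans by blast
  have int1: "integrable lborel (\<lambda>a. \<integral>b. norm (F a b) \<partial>lborel)"
    unfolding inner1n
  proof (rule Bochner_Integration.integrable_bound)
    show "integrable lborel (\<lambda>a::real^'n. (A * B * M) * U (- real CARD('n)) a)"
    proof -
      have "- real CARD('n) < - real CARD('n) / 2" by simp
      thus ?thesis using U_integrable by (intro integrable_mult_right) blast
    qed
    have "(\<lambda>a. \<integral>b. norm (F a b) \<partial>lborel) \<in> borel_measurable lborel" by measurable
    thus "(\<lambda>a. \<bar>W a * Y a\<bar> * ?V a) \<in> borel_measurable lborel" unfolding inner1n .
    show "AE a in lborel. norm (\<bar>W a * Y a\<bar> * ?V a) \<le> norm ((A * B * M) * U (- real CARD('n)) a)"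
    proof (rule AE_I2)
      fix a :: "real^'n"
      have "\<bar>W a * Y a\<bar> * ?V a \<le> (A * (B * U (- real CARD('n)) a)) * M"
        using V0[of a] Vb[of a] bW[of a] bY[of a] A0 B U_pos[of "- real CARD('n)" a]
        by (intro mult_mono) (auto simp: abs_mult intro: mult_mono)
      thus "norm (\<bar>W a * Y a\<bar> * ?V a) \<le> norm ((A * B * M) * U (- real CARD('n)) a)"
        using V0[of a] by (simp add: mult_ac)
    qed
  qed
  have int2: "AE a in lborel. integrable lborel (\<lambda>b. F a b)"
    unfolding F_def using Vint by (intro AE_I2 integrable_mult_right) simp
  have intF: "integrable (lborel \<Otimes>\<^sub>M lborel) (case_prod F)"
    by (rule lborel_pair.Fubini_integrable[OF Fm]) (use int1 int2 in simp_all)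
  show "integrable lborel (\<lambda>x. conv4 (\<lambda>y. W y * Y y) x * W x * W x)"
    using lborel_pair.integrable_snd[OF intF] unfolding inner2 .
  have "(\<integral>b. (\<integral>a. F a b \<partial>lborel) \<partial>lborel) = (\<integral>a. (\<integral>b. F a b \<partial>lborel) \<partial>lborel)"
    by (rule lborel_pair.Fubini_integral[OF intF])
  thus "integral\<^sup>L lborel (\<lambda>x. conv4 (\<lambda>y. W y * Y y) x * W x * W x)
         = integral\<^sup>L lborel (\<lambda>y. W y * Y y * conv4 (\<lambda>y. (W y)\<^sup>2) y)"
    unfolding inner1 inner2 .
qed

definition Wtf :: "real \<Rightarrow> real \<Rightarrow> real^'n::finite \<Rightarrow> real" where
  "Wtf c p x = c*p*(U p x - 2*U (p-1) x)"
definition dWtf :: "real \<Rightarrow> real \<Rightarrow> 'n::finite \<Rightarrow> real^'n \<Rightarrow> real" where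
  "dWtf c p j x = c*p*(2*p*(x$j)*U (p-1) x - 2*(2*(p-1)*(x$j)*U (p-2) x))"
definition Gf :: "real \<Rightarrow> real \<Rightarrow> real^'n::finite \<Rightarrow> real" where
  "Gf c p x = 2*c^2*p^2*(U (2*p-1) x - U (2*p-2) x)"
definition dGf :: "real \<Rightarrow> real \<Rightarrow> 'n::finite \<Rightarrow> real^'n \<Rightarrow> real" where
  "dGf c p i x = 2*c^2*p^2*(2*(2*p-1)*(x$i)*U (2*p-2) x - 2*(2*p-2)*(x$i)*U (2*p-3) x)"

lemma LD_Wt: "LD j (Wtf c p) (dWtf c p j)"
proof -
  have "LD j (\<lambda>x. c*p*(U p x - 2*U (p-1) x)) (\<lambda>x. c*p*(2*p*(x$j)*U (p-1) x - 2*(2*(p-1)*(x$j)*U (p-1-1) x)))"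
    by (intro LD_cmult LD_diff LD_U)
  thus ?thesis unfolding Wtf_def dWtf_def by (rule LD_cong) (simp add: algebra_simps)
qed

lemma LD_H: "LD i (\<lambda>x. x$i * Gf c p x) (\<lambda>x. Gf c p x + x$i * dGf c p i x)"
proof -
  have "LD i (\<lambda>x. x$i * (2*c^2*p^2*(U (2*p-1) x - U (2*p-2) x)))
     (\<lambda>x. 1 * (2*c^2*p^2*(U (2*p-1) x - U (2*p-2) x)) + x$i * (2*c^2*p^2*(2*(2*p-1)*(x$i)*U (2*p-1-1) x - 2*(2*p-2)*(x$i)*U (2*p-2-1) x)))"
    by (intro LD_mult LD_coord LD_cmult LD_diff LD_U)
  thus ?thesis unfolding Gf_def dGf_def by (rule LD_cong) (simp add: algebra_simps)
qed

lemma cont_Wt: "continuous_on UNIV (Wtf c p)" unfolding Wtf_def by (intro continuous_intros)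
lemma cont_dWt: "continuous_on UNIV (dWtf c p i)" unfolding dWtf_def by (intro continuous_intros)
lemma cont_G: "continuous_on UNIV (Gf c p)" unfolding Gf_def by (intro continuous_intros)
lemma cont_dG: "continuous_on UNIV (dGf c p i)" unfolding dGf_def by (intro continuous_intros)

lemma Wt_eq:
  fixes x :: "real^'n::finite"
  assumes p: "p = - (real CARD('n) - 2) / 2"
  shows "(real CARD('n) - 2) / 2 * Wf c p x + (\<Sum>i\<in>UNIV. x $ i * dWf c p i x) = Wtf c p x"
proof -
  have "(\<Sum>i\<in>UNIV. x $ i * dWf c p i x) = (\<Sum>i\<in>UNIV. (x $ i)\<^sup>2 * (2*c*p*U (p-1) x))"
    unfolding dWf_def by (simp add: power2_eq_square mult_ac)
  also have "\<dots> = (norm x)\<^sup>2 * (2*c*p*U (p-1) x)" by (simp add: sum_distrib_right norm_sq_sum)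
  finally have s: "(\<Sum>i\<in>UNIV. x $ i * dWf c p i x) = (norm x)\<^sup>2 * (2*c*p*U (p-1) x)" .
  have u: "U p x = (1 + (norm x)\<^sup>2) * U (p-1) x" using U_succ[of "p-1" x] by simp
  have d: "(real CARD('n) - 2) / 2 = - p" using p by simp
  show ?thesis unfolding s d Wtf_def Wf_def u by (simp add: algebra_simps)
qed

lemma div_identity:
  fixes x :: "real^'n::finite"
  assumes p: "p = - (real CARD('n) - 2) / 2"
  shows "(\<Sum>j\<in>UNIV. dWtf c p j x * dWf c p j x) = (\<Sum>i\<in>UNIV. Gf c p x + x$i * dGf c p i x)"
proof -
  let ?s = "(norm x)\<^sup>2" and ?A = "U (2*p-2) x" and ?B = "U (2*p-3) x"
  have u1: "U (p-1) x * U (p-1) x = ?A" using U_add[of "p-1" x "p-1"] by (simp add: algebra_simps)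
  have u2: "U (p-2) x * U (p-1) x = ?B" using U_add[of "p-2" x "p-1"] by (simp add: algebra_simps)
  have u3: "U (2*p-1) x = (1 + ?s) * ?A" using U_succ[of "2*p-2" x] by (simp add: algebra_simps)
  have l: "dWtf c p j x * dWf c p j x = (x$j)\<^sup>2 * (2*c^2*p^2*(2*p*?A - 4*(p-1)*?B))" for j
  proof -
    have "dWtf c p j x * dWf c p j x = (x$j)\<^sup>2 * (2*c^2*p^2*(2*p*(U (p-1) x * U (p-1) x) - 4*(p-1)*(U (p-2) x * U (p-1) x)))"
      unfolding dWtf_def dWf_def by (simp add: algebra_simps power2_eq_square)
    thus ?thesis unfolding u1 u2 .
  qed
  have r: "x$i * dGf c p i x = (x$i)\<^sup>2 * (2*c^2*p^2*(2*(2*p-1)*?A - 2*(2*p-2)*?B))" for i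
    unfolding dGf_def by (simp add: algebra_simps power2_eq_square)
  have "(\<Sum>j\<in>UNIV. dWtf c p j x * dWf c p j x) = ?s * (2*c^2*p^2*(2*p*?A - 4*(p-1)*?B))"
    unfolding l by (simp add: sum_distrib_right norm_sq_sum)
  moreover have "(\<Sum>i\<in>UNIV. Gf c p x + x$i * dGf c p i x)
      = real CARD('n) * Gf c p x + ?s * (2*c^2*p^2*(2*(2*p-1)*?A - 2*(2*p-2)*?B))"
    unfolding r by (simp add: sum.distrib sum_distrib_right norm_sq_sum)
  moreover have "Gf c p x = 2*c^2*p^2*(?s * ?A)" unfolding Gf_def u3 by (simp add: algebra_simps)
  moreover have "real CARD('n) = 2 - 2*p" using p by simp
  ultimately show ?thesis by (simp add: algebra_simps)
qed

lemma abs_diff2: "\<bar>(a::real) * u - b * v\<bar> \<le> \<bar>a\<bar> * \<bar>u\<bar> + \<bar>b\<bar> * \<bar>v\<bar>"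
  by (metis abs_mult abs_triangle_ineq4)

lemma coordU: "\<bar>(x::real^'n::finite) $ i * U q x\<bar> \<le> U (q+1) x"
  using coord_abs_U[of x i q] U_pos[of q x] by (simp add: abs_mult)

lemma coord2U: "\<bar>(x::real^'n::finite) $ i * (x $ i * U q x)\<bar> \<le> U (q+1) x"
  using coord_sq_U[of x i q] U_pos[of q x] by (simp add: abs_mult power2_eq_square abs_mult_self_eq)

context
  fixes c p :: real
  assumes c: "c \<ge> 0" and p: "p = - (real CARD('n::finite) - 2) / 2" and d5: "CARD('n) \<ge> 5"
begin

lemma qf: "p \<le> 0" "2*p < - real CARD('n) / 2" "2*p - 1 < - real CARD('n) / 2"
  using p d5 by (simp_all add: field_simps)

lemma bound_G: "\<bar>Gf c p (x::real^'n)\<bar> \<le> (4*c^2*p^2) * U (2*p-1) x"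
proof -
  have "\<bar>U (2*p-1) x - U (2*p-2) x\<bar> \<le> 2 * U (2*p-1) x"
    using U_pos[of "2*p-1" x] U_pos[of "2*p-2" x] U_mono[of "2*p-2" "2*p-1" x] by simp
  hence "2*c^2*p^2 * \<bar>U (2*p-1) x - U (2*p-2) x\<bar> \<le> 2*c^2*p^2 * (2 * U (2*p-1) x)"
    by (intro mult_left_mono) auto
  thus ?thesis unfolding Gf_def by (simp add: abs_mult)
qed

lemma bound_xdG: "\<bar>(x::real^'n)$i * dGf c p i x\<bar> \<le> (2*c^2*p^2*(\<bar>2*(2*p-1)\<bar> + \<bar>2*(2*p-2)\<bar>)) * U (2*p-1) x"
proof -
  have e: "x$i * dGf c p i x = 2*c^2*p^2*((2*(2*p-1)) * (x$i * (x$i * U (2*p-2) x)) - (2*(2*p-2)) * (x$i * (x$i * U (2*p-3) x)))"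
    unfolding dGf_def by (simp add: algebra_simps)
  have a1: "\<bar>x$i * (x$i * U (2*p-2) x)\<bar> \<le> U (2*p-1) x" using coord2U[of x i "2*p-2"] by simp
  have a2: "\<bar>x$i * (x$i * U (2*p-3) x)\<bar> \<le> U (2*p-1) x"
    using coord2U[of x i "2*p-3"] U_mono[of "2*p-2" "2*p-1" x] by simp
  have "\<bar>(2*(2*p-1)) * (x$i * (x$i * U (2*p-2) x)) - (2*(2*p-2)) * (x$i * (x$i * U (2*p-3) x))\<bar>
     \<le> \<bar>2*(2*p-1)\<bar> * U (2*p-1) x + \<bar>2*(2*p-2)\<bar> * U (2*p-1) x"
    using abs_diff2[of "2*(2*p-1)" "x$i * (x$i * U (2*p-2) x)" "2*(2*p-2)" "x$i * (x$i * U (2*p-3) x)"]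
      mult_left_mono[OF a1, of "\<bar>2*(2*p-1)\<bar>"] mult_left_mono[OF a2, of "\<bar>2*(2*p-2)\<bar>"] by simp
  hence "2*c^2*p^2 * \<bar>(2*(2*p-1)) * (x$i * (x$i * U (2*p-2) x)) - (2*(2*p-2)) * (x$i * (x$i * U (2*p-3) x))\<bar>
     \<le> 2*c^2*p^2 * (\<bar>2*(2*p-1)\<bar> * U (2*p-1) x + \<bar>2*(2*p-2)\<bar> * U (2*p-1) x)"
    by (intro mult_left_mono) auto
  moreover have "\<bar>x$i * dGf c p i x\<bar> = 2*c^2*p^2 * \<bar>(2*(2*p-1)) * (x$i * (x$i * U (2*p-2) x)) - (2*(2*p-2)) * (x$i * (x$i * U (2*p-3) x))\<bar>"
  proof -
    have nn: "\<bar>2*c^2*p^2\<bar> = 2*c^2*p^2" by simp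
    show ?thesis unfolding e by (simp only: abs_mult[of "2*c^2*p^2"] nn)
  qed
  ultimately show ?thesis by (simp only: distrib_left distrib_right mult_ac)
qed

lemma G_int_zero: "integral\<^sup>L lborel (\<lambda>x::real^'n. Gf c p x + x$i * dGf c p i x) = 0"
  and G_integrable: "integrable lborel (\<lambda>x::real^'n. Gf c p x + x$i * dGf c p i x)"
proof -
  let ?K = "4*c^2*p^2 + 2*c^2*p^2*(\<bar>2*(2*p-1)\<bar> + \<bar>2*(2*p-2)\<bar>)"
  have b: "\<bar>Gf c p x + x$i * dGf c p i x\<bar> \<le> ?K * U (2*p-1) x" for x :: "real^'n"
    using bound_G[of x] bound_xdG[of x i] by (simp add: algebra_simps abs_triangle_ineq order_trans[OF abs_triangle_ineq])
  have bF: "\<bar>x$i * Gf c p x\<bar> \<le> (4*c^2*p^2) * U (2*p) x" for x :: "real^'n"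
  proof -
    have "\<bar>x$i * Gf c p x\<bar> = \<bar>x$i\<bar> * \<bar>Gf c p x\<bar>" by (simp add: abs_mult)
    also have "\<dots> \<le> \<bar>x$i\<bar> * ((4*c^2*p^2) * U (2*p-1) x)" by (intro mult_left_mono bound_G) auto
    also have "\<dots> = (4*c^2*p^2) * (\<bar>x$i\<bar> * U (2*p-1) x)" by simp
    also have "\<dots> \<le> (4*c^2*p^2) * U (2*p-1+1) x" by (intro mult_left_mono coord_abs_U) auto
    finally show ?thesis by simp
  qed
  have cF: "continuous_on UNIV (\<lambda>x::real^'n. x$i * Gf c p x)"
    by (intro continuous_intros cont_G)
  have cF': "continuous_on UNIV (\<lambda>x::real^'n. Gf c p x + x$i * dGf c p i x)"
    by (intro continuous_intros cont_G cont_dG)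
  show "integrable lborel (\<lambda>x::real^'n. Gf c p x + x$i * dGf c p i x)"
    by (rule integrable_of_bound[OF cF' b qf(3)])
  show "integral\<^sup>L lborel (\<lambda>x::real^'n. Gf c p x + x$i * dGf c p i x) = 0"
    by (rule LD_int_zero[OF LD_H cF cF' integrable_of_bound[OF cF bF qf(2)] qf(3) b])
qed

lemma bound_dWt: "\<bar>dWtf c p j (x::real^'n)\<bar> \<le> (c*\<bar>p\<bar>*(\<bar>2*p\<bar> + \<bar>4*(p-1)\<bar>)) * U p x"
proof -
  have e: "dWtf c p j x = c*p*((2*p) * (x$j * U (p-1) x) - (4*(p-1)) * (x$j * U (p-2) x))"
    unfolding dWtf_def by (simp add: algebra_simps)
  have a1: "\<bar>x$j * U (p-1) x\<bar> \<le> U p x" using coordU[of x j "p-1"] by simp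
  have a2: "\<bar>x$j * U (p-2) x\<bar> \<le> U p x" using coordU[of x j "p-2"] U_mono[of "p-1" p x] by simp
  have "\<bar>(2*p) * (x$j * U (p-1) x) - (4*(p-1)) * (x$j * U (p-2) x)\<bar> \<le> \<bar>2*p\<bar> * U p x + \<bar>4*(p-1)\<bar> * U p x"
    using abs_diff2[of "2*p" "x$j * U (p-1) x" "4*(p-1)" "x$j * U (p-2) x"]
      mult_left_mono[OF a1, of "\<bar>2*p\<bar>"] mult_left_mono[OF a2, of "\<bar>4*(p-1)\<bar>"] by simp
  hence "c*\<bar>p\<bar> * \<bar>(2*p) * (x$j * U (p-1) x) - (4*(p-1)) * (x$j * U (p-2) x)\<bar> \<le> c*\<bar>p\<bar> * (\<bar>2*p\<bar> * U p x + \<bar>4*(p-1)\<bar> * U p x)"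
    using c by (intro mult_left_mono) auto
  moreover have "\<bar>dWtf c p j x\<bar> = c*\<bar>p\<bar> * \<bar>(2*p) * (x$j * U (p-1) x) - (4*(p-1)) * (x$j * U (p-2) x)\<bar>"
  proof -
    have "\<bar>c*p\<bar> = c*\<bar>p\<bar>" using c by (simp add: abs_mult)
    thus ?thesis unfolding e by (simp only: abs_mult[of "c*p"])
  qed
  ultimately show ?thesis by (simp only: distrib_left distrib_right mult_ac)
qed

lemma Wt_W_zero:
  "(\<Sum>j\<in>UNIV. integral\<^sup>L lborel (\<lambda>x::real^'n. dWtf c p j x * dWf c p j x)) = 0"
proof -
  have K: "c*\<bar>p\<bar>*(\<bar>2*p\<bar> + \<bar>4*(p-1)\<bar>) \<ge> 0" "2*\<bar>p\<bar>*c \<ge> 0" using c by auto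
  have ij: "integrable lborel (\<lambda>x::real^'n. dWtf c p j x * dWf c p j x)" for j
  proof (rule integrable_of_bound[OF _ _ qf(2)])
    show "continuous_on UNIV (\<lambda>x::real^'n. dWtf c p j x * dWf c p j x)"
      by (intro continuous_intros cont_dWt cont_dW)
    fix x :: "real^'n"
    show "\<bar>dWtf c p j x * dWf c p j x\<bar> \<le> (c*\<bar>p\<bar>*(\<bar>2*p\<bar> + \<bar>4*(p-1)\<bar>) * (2*\<bar>p\<bar>*c)) * U (2*p) x"
      by (rule prod_bound'[OF bound_dWt bound_dW[OF c] K]) simp
  qed
  have "(\<Sum>j\<in>UNIV. integral\<^sup>L lborel (\<lambda>x::real^'n. dWtf c p j x * dWf c p j x))
      = integral\<^sup>L lborel (\<lambda>x::real^'n. \<Sum>j\<in>UNIV. dWtf c p j x * dWf c p j x)"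
    by (rule Bochner_Integration.integral_sum[symmetric]) (rule ij)
  also have "\<dots> = integral\<^sup>L lborel (\<lambda>x::real^'n. \<Sum>i\<in>UNIV. Gf c p x + x$i * dGf c p i x)"
    by (simp add: div_identity[OF p])
  also have "\<dots> = (\<Sum>i\<in>UNIV. integral\<^sup>L lborel (\<lambda>x::real^'n. Gf c p x + x$i * dGf c p i x))"
    by (rule Bochner_Integration.integral_sum) (rule G_integrable)
  also have "\<dots> = 0" by (simp add: G_int_zero)
  finally show ?thesis .
qed

end

lemma int_i_real: "integral\<^sup>L M (\<lambda>x. \<i> * complex_of_real (g x)) = \<i> * complex_of_real (integral\<^sup>L M g)"
  by (simp only: integral_mult_right_zero integral_complex_of_real)

theorem corollary2p19:
  fixes W :: "real^'n::finite \<Rightarrow> real"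
    and Yp Ym :: "real^'n \<Rightarrow> complex"
    and c0 e0 :: real
  assumes dim: "CARD('n) \<ge> 5"
    and c0_pos: "c0 > 0"
    and W_def: "\<And>x. W x = c0 * (1 + (norm x)\<^sup>2) powr (- (real CARD('n) - 2) / 2)"
    and W_eq: "\<And>x. - lap W x = conv4 (\<lambda>y. (W y)\<^sup>2) x * W x"
    and e0_pos: "e0 > 0"
    and Yp_schwartz: "schwartz Yp" and Ym_schwartz: "schwartz Ym"
    and Yp_radial: "radial Yp" and Ym_radial: "radial Ym"
    and Yp_eig: "\<And>x. Lop W Yp x = e0 * Yp x"
    and Ym_eig: "\<And>x. Lop W Ym x = - e0 * Ym x"
    and Yp_conj: "\<And>x. Yp x = cnj (Ym x)"
    and coercive: "\<exists>c>0. \<forall>h. radial h \<and> in_Hdot1 h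
        \<and> hdot_inner (\<lambda>x. \<i> * complex_of_real (W x)) h = 0
        \<and> hdot_inner (\<lambda>x. complex_of_real ((real CARD('n) - 2) / 2 * W x
                          + (\<Sum>i\<in>UNIV. x $ i * pdiff i W x))) h = 0
        \<and> Bform W Yp h = 0 \<and> Bform W Ym h = 0
        \<longrightarrow> Phi W h \<ge> c * hdot_norm2 h"
  shows "(\<integral>x. (\<Sum>i\<in>UNIV. pdiff i W x * pdiff i (\<lambda>y. Re (Yp y)) x) \<partial>lborel) \<noteq> 0"
proof
  assume H: "(\<integral>x. (\<Sum>i\<in>UNIV. pdiff i W x * pdiff i (\<lambda>y. Re (Yp y)) x) \<partial>lborel) = 0"
  define p where "p = - (real CARD('n) - 2) / 2"
  have c: "c0 \<ge> 0" using c0_pos by simp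
  have Wd: "W = Wf c0 p" by (rule ext) (simp add: W_def Wf_def U_def p_def)
  note facts = c p_def dim
  note S = Yp_schwartz
  let ?V = "conv4 (\<lambda>y. (Wf c0 p y)\<^sup>2)"
  have Weq: "?V x * Wf c0 p x = 4 * p * (p-1) * c0 * U (p-2) x" for x :: "real^'n"
    using W_eq[of x] lap_W[OF p_def, where c=c0 and x=x] unfolding Wd by simp
  have pp: "p \<le> -3/2" using dim unfolding p_def by simp
  have k0: "4 * p * (p-1) > 0" using pp by (simp add: mult_pos_pos mult_neg_neg)
  have Vne: "?V y \<noteq> 0" for y :: "real^'n"
    using Weq[of y] k0 c0_pos U_pos[of "p-2" y] by auto
  have Vb: "?V y \<le> 4 * p * (p-1)" for y :: "real^'n"
  proof -
    have "?V y * U p y * c0 = 4 * p * (p-1) * U (p-2) y * c0" using Weq[of y] unfolding Wf_def by (simp add: mult_ac)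
    hence "?V y * U p y = 4 * p * (p-1) * U (p-2) y" using c0_pos by simp
    also have "\<dots> \<le> 4 * p * (p-1) * U p y" using k0 U_mono[of "p-2" p y] by (intro mult_left_mono) auto
    finally show ?thesis using U_pos[of p y] by simp
  qed
  have H0: "integral\<^sup>L lborel (\<lambda>x. \<Sum>i\<in>UNIV. dWf c0 p i x * Re (pdiff i Yp x)) = 0"
    using H unfolding Wd pdiff_W LD_pdiff_fun[OF LDY0[OF facts S]] .
  obtain cc where cc: "cc > 0" and co: "\<And>h. radial h \<and> in_Hdot1 h
        \<and> hdot_inner (\<lambda>x. \<i> * complex_of_real (W x)) h = 0
        \<and> hdot_inner (\<lambda>x. complex_of_real ((real CARD('n) - 2) / 2 * W x
                          + (\<Sum>i\<in>UNIV. x $ i * pdiff i W x))) h = 0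
        \<and> Bform W Yp h = 0 \<and> Bform W Ym h = 0
        \<longrightarrow> Phi W h \<ge> cc * hdot_norm2 h"
    using coercive by blast
  define h where "h x = complex_of_real (Wf c0 p x)" for x :: "real^'n"
  have pd_h: "pdiff i h x = complex_of_real (dWf c0 p i x)" for i x
    unfolding h_def by (rule LD_pdiff_of_real[OF LD_W])
  define N where "N = (\<Sum>i\<in>UNIV. integral\<^sup>L lborel (\<lambda>x::real^'n. (dWf c0 p i x)\<^sup>2))"
  have rad: "radial h"
    unfolding radial_def h_def Wf_def U_def by simp
  have hd: "in_Hdot1 h"
    unfolding in_Hdot1_def
  proof (intro conjI allI)
    fix i x
    show "(\<lambda>t. h (x + t *\<^sub>R axis i 1)) differentiable (at 0)"
      unfolding h_def by (rule LD_diffble_of_real[OF LD_W])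
  next
    fix i
    have "pdiff i h = (\<lambda>x. complex_of_real (dWf c0 p i x))" using pd_h by (intro ext) simp
    thus "continuous_on UNIV (pdiff i h)" using cont_dW[of c0 p i] by (auto intro: continuous_intros)
  next
    let ?e = "2 * real CARD('n) / (real CARD('n) - 2)"
    have pe: "p * ?e = - real CARD('n)" using dim unfolding p_def by (simp add: field_simps)
    have "(\<lambda>x. cmod (h x) powr ?e) = (\<lambda>x. c0 powr ?e * U (- real CARD('n)) x)"
    proof
      fix x :: "real^'n"
      have "cmod (h x) = \<bar>Wf c0 p x\<bar>" unfolding h_def by (rule norm_of_real)
      also have "\<dots> = c0 * U p x" unfolding Wf_def using c U_pos[of p x] by (simp add: abs_mult)
      finally have "cmod (h x) = c0 * U p x" .
      hence "cmod (h x) powr ?e = c0 powr ?e * (U p x) powr ?e" by (simp add: powr_mult)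
      also have "(U p x) powr ?e = U (- real CARD('n)) x" unfolding U_def powr_powr pe ..
      finally show "cmod (h x) powr ?e = c0 powr ?e * U (- real CARD('n)) x" .
    qed
    moreover have "integrable lborel (\<lambda>x::real^'n. c0 powr ?e * U (- real CARD('n)) x)"
    proof -
      have "- real CARD('n) < - real CARD('n) / 2" by simp
      thus ?thesis using U_integrable by (intro integrable_mult_right) blast
    qed
    ultimately show "integrable lborel (\<lambda>x. cmod (h x) powr ?e)" by simp
  next
    fix i
    show "integrable lborel (\<lambda>x. (cmod (pdiff i h x))\<^sup>2)"
      unfolding pd_h using W_W_ibp(3)[OF facts, of i] by (simp add: power2_eq_square)
  qed
  have i1: "hdot_inner (\<lambda>x. \<i> * complex_of_real (W x)) h = 0"
  proof -
    have pd: "pdiff i (\<lambda>x. \<i> * complex_of_real (Wf c0 p x)) x = \<i> * complex_of_real (dWf c0 p i x)" for i x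
      by (rule LD_pdiff_c[OF LD_W])
    have F: "(\<lambda>x. pdiff i (\<lambda>x. \<i> * complex_of_real (Wf c0 p x)) x * cnj (pdiff i h x))
        = (\<lambda>x. \<i> * complex_of_real (dWf c0 p i x * dWf c0 p i x))" for i
      unfolding pd pd_h by (simp add: mult.assoc)
    have "hdot_inner (\<lambda>x. \<i> * complex_of_real (Wf c0 p x)) h
       = Re (\<Sum>i\<in>UNIV. \<i> * complex_of_real (integral\<^sup>L lborel (\<lambda>x::real^'n. dWf c0 p i x * dWf c0 p i x)))"
      unfolding hdot_inner_def F int_i_real ..
    also have "\<dots> = 0" by (simp add: Re_sum)
    finally show ?thesis unfolding Wd .
  qed
  have i2: "hdot_inner (\<lambda>x. complex_of_real ((real CARD('n) - 2) / 2 * W x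
                          + (\<Sum>i\<in>UNIV. x $ i * pdiff i W x))) h = 0"
  proof -
    have e: "(\<lambda>x. complex_of_real ((real CARD('n) - 2) / 2 * W x + (\<Sum>i\<in>UNIV. x $ i * pdiff i W x)))
        = (\<lambda>x. complex_of_real (Wtf c0 p x))"
      unfolding Wd pdiff_W using Wt_eq[OF p_def] by simp
    have pd: "pdiff i (\<lambda>x. complex_of_real (Wtf c0 p x)) x = complex_of_real (dWtf c0 p i x)" for i x
      by (rule LD_pdiff_of_real[OF LD_Wt])
    have F: "(\<lambda>x. pdiff i (\<lambda>x. complex_of_real (Wtf c0 p x)) x * cnj (pdiff i h x))
        = (\<lambda>x. complex_of_real (dWtf c0 p i x * dWf c0 p i x))" for i
      unfolding pd pd_h by simp
    have "hdot_inner (\<lambda>x. complex_of_real (Wtf c0 p x)) h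
        = (\<Sum>i\<in>UNIV. integral\<^sup>L lborel (\<lambda>x::real^'n. dWtf c0 p i x * dWf c0 p i x))"
      unfolding hdot_inner_def F integral_complex_of_real by (simp only: Re_sum Re_complex_of_real)
    also have "\<dots> = 0" by (rule Wt_W_zero[OF facts])
    finally show ?thesis unfolding e .
  qed
  have LpW: "integral\<^sup>L lborel (\<lambda>x::real^'n. Lplus W (\<lambda>y. Re (Yp y)) x * Wf c0 p x) = 0"
  proof -
    let ?Y = "\<lambda>y. Re (Yp y)"
    let ?C = "conv4 (\<lambda>y. Wf c0 p y * Re (Yp y))"
    have Weq': "?V x * Wf c0 p x = - lap (Wf c0 p) x" for x :: "real^'n" using W_eq[of x] unfolding Wd by simp
    obtain B0 where B0: "B0 \<ge> 0" "\<And>x. \<bar>Re (Yp x)\<bar> \<le> B0 * U (- real CARD('n)) x"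
      using schwartz_bound[OF S, of "[]"] by auto
    have bW: "\<bar>Wf c0 p x\<bar> \<le> c0" for x :: "real^'n"
      using bound_W[OF c, of p x] U_le_1[of p x] pp c mult_left_mono[of "U p x" 1 c0] by simp
    note F = fubini_conv[OF cont_W contY0[OF facts S] bW B0(2) B0(1) Vne Vb]
    have z1: "integral\<^sup>L lborel (\<lambda>x::real^'n. ?C x * Wf c0 p x * Wf c0 p x) = 0"
    proof -
      have "(\<lambda>y. Wf c0 p y * Re (Yp y) * ?V y) = (\<lambda>y. - (lap (Wf c0 p) y * Re (Yp y)))"
      proof
        fix y :: "real^'n"
        have "Wf c0 p y * Re (Yp y) * ?V y = (?V y * Wf c0 p y) * Re (Yp y)" by (simp only: mult_ac)
        also have "\<dots> = - (lap (Wf c0 p) y * Re (Yp y))" unfolding Weq' by simp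
        finally show "Wf c0 p y * Re (Yp y) * ?V y = - (lap (Wf c0 p) y * Re (Yp y))" .
      qed
      thus ?thesis unfolding F(2) using lapY_W(2)[OF facts S H0] by simp
    qed
    have pw: "Lplus W ?Y x * Wf c0 p x = (lap (Wf c0 p) x * Re (Yp x) - lap ?Y x * Wf c0 p x) - 2 * (?C x * Wf c0 p x * Wf c0 p x)" for x :: "real^'n"
    proof -
      have "Lplus W ?Y x * Wf c0 p x = - (lap ?Y x * Wf c0 p x) - (?V x * Wf c0 p x) * Re (Yp x) - 2 * (?C x * Wf c0 p x * Wf c0 p x)"
        unfolding Lplus_def Wd by (simp add: algebra_simps)
      thus ?thesis unfolding Weq' by simp
    qed
    have "integral\<^sup>L lborel (\<lambda>x::real^'n. Lplus W ?Y x * Wf c0 p x)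
        = integral\<^sup>L lborel (\<lambda>x. (lap (Wf c0 p) x * Re (Yp x) - lap ?Y x * Wf c0 p x) - 2 * (?C x * Wf c0 p x * Wf c0 p x))"
      unfolding pw ..
    also have "\<dots> = (integral\<^sup>L lborel (\<lambda>x. lap (Wf c0 p) x * Re (Yp x)) - integral\<^sup>L lborel (\<lambda>x. lap ?Y x * Wf c0 p x))
        - 2 * integral\<^sup>L lborel (\<lambda>x. ?C x * Wf c0 p x * Wf c0 p x)"
      using lapY_W(3,4)[OF facts S H0] F(1)
      by (simp add: Bochner_Integration.integral_diff)
    also have "\<dots> = 0" using lapY_W(1,2)[OF facts S H0] z1 by simp
    finally show ?thesis .
  qed
  have B1: "Bform W Yp h = 0"
    unfolding Bform_def h_def using LpW by simp
  have ReYm: "(\<lambda>y. Re (Ym y)) = (\<lambda>y. Re (Yp y))"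
    by (rule ext) (simp add: Yp_conj)
  have B2: "Bform W Ym h = 0"
    unfolding Bform_def h_def ReYm using LpW by simp
  have Weq2: "?V x * Wf c0 p x = - lap (Wf c0 p) x" for x :: "real^'n" using W_eq[of x] unfolding Wd by simp
  have MN: "integral\<^sup>L lborel (\<lambda>x::real^'n. - (lap (Wf c0 p) x * Wf c0 p x)) = N"
    using lapW_W[OF facts] unfolding N_def by simp
  have Phi: "Phi W h = - N"
  proof -
    have hRe: "(\<lambda>y. Re (h y)) = Wf c0 p" by (rule ext) (simp add: h_def)
    have hRe': "Re (h x) = Wf c0 p x" for x by (simp add: h_def)
    have hIm: "(\<lambda>y. Im (h y)) = (\<lambda>y. 0)" by (rule ext) (simp add: h_def)
    have hIm': "Im (h x) = 0" for x by (simp add: h_def)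
    have P1: "(\<Sum>i\<in>UNIV. \<integral>x. (pdiff i (\<lambda>y. Re (h y)) x)\<^sup>2 \<partial>lborel) = N"
      unfolding hRe pdiff_W N_def ..
    have P2: "(\<integral>x. ?V x * (Re (h x))\<^sup>2 \<partial>lborel) = N"
    proof -
      have "(\<lambda>x. ?V x * (Re (h x))\<^sup>2) = (\<lambda>x. - (lap (Wf c0 p) x * Wf c0 p x))"
      proof
        fix x :: "real^'n"
        have "?V x * (Re (h x))\<^sup>2 = (?V x * Wf c0 p x) * Wf c0 p x" unfolding hRe' by (simp add: power2_eq_square mult_ac)
        thus "?V x * (Re (h x))\<^sup>2 = - (lap (Wf c0 p) x * Wf c0 p x)" unfolding Weq2 by simp
      qed
      thus ?thesis using MN by simp
    qed
    have P3: "(\<integral>x. conv4 (\<lambda>y. Wf c0 p y * Re (h y)) x * Wf c0 p x * Re (h x) \<partial>lborel) = N"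
    proof -
      have cv: "conv4 (\<lambda>y. Wf c0 p y * Wf c0 p y) = ?V"
        by (simp add: power2_eq_square)
      have "(\<lambda>x. conv4 (\<lambda>y. Wf c0 p y * Re (h y)) x * Wf c0 p x * Re (h x)) = (\<lambda>x. - (lap (Wf c0 p) x * Wf c0 p x))"
      proof
        fix x :: "real^'n"
        show "conv4 (\<lambda>y. Wf c0 p y * Re (h y)) x * Wf c0 p x * Re (h x) = - (lap (Wf c0 p) x * Wf c0 p x)"
          unfolding hRe' cv using Weq2[of x] by simp
      qed
      thus ?thesis using MN by simp
    qed
    have P4: "(\<Sum>i\<in>UNIV. \<integral>x. (pdiff i (\<lambda>y. Im (h y)) x)\<^sup>2 \<partial>(lborel::(real^'n) measure)) = 0"
      unfolding hIm by (simp add: pdiff_def)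
    have P5: "(\<integral>x. ?V x * (Im (h x))\<^sup>2 \<partial>lborel) = 0"
      unfolding hIm' by simp
    show ?thesis unfolding Phi_def Let_def Wd P1 P2 P3 P4 P5 by simp
  qed
  have norm2: "hdot_norm2 h = N"
    unfolding hdot_norm2_def pd_h N_def by simp
  have Npos: "N > 0"
  proof -
    have qq: "2*p-2 < - real CARD('n) / 2" using dim unfolding p_def by (simp add: field_simps)
    have int: "integrable lborel (U (2*p-2) :: real^'n \<Rightarrow> real)" by (rule U_integrable[OF qq])
    have fx: "- (lap (Wf c0 p) x * Wf c0 p x) = (4*p*(p-1)*c0^2) * U (2*p-2) x" for x :: "real^'n"
    proof -
      have "U (p-2) x * U p x = U (2*p-2) x" using U_add[of "p-2" x p] by (simp add: algebra_simps)
      thus ?thesis using lap_W[OF p_def, where c=c0 and x=x] unfolding Wf_def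
        by (simp add: power2_eq_square mult_ac)
    qed
    have NU: "N = (4*p*(p-1)*c0^2) * integral\<^sup>L lborel (U (2*p-2) :: real^'n \<Rightarrow> real)"
      using MN unfolding fx by simp
    have I0: "integral\<^sup>L lborel (U (2*p-2) :: real^'n \<Rightarrow> real) \<ge> 0"
      using U_pos by (intro Bochner_Integration.integral_nonneg less_imp_le) 
    have I1: "integral\<^sup>L lborel (U (2*p-2) :: real^'n \<Rightarrow> real) \<noteq> 0"
    proof
      assume "integral\<^sup>L lborel (U (2*p-2) :: real^'n \<Rightarrow> real) = 0"
      hence "AE x in lborel. U (2*p-2) (x::real^'n) = 0"
      proof -
        have nn: "AE x in lborel. 0 \<le> U (2*p-2) (x::real^'n)" by (rule AE_I2) (simp add: less_imp_le U_pos)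
        show ?thesis using integral_nonneg_eq_0_iff_AE[OF int nn] \<open>integral\<^sup>L lborel (U (2*p-2) :: real^'n \<Rightarrow> real) = 0\<close> by simp
      qed
      hence "AE x in lborel. (x::real^'n) \<notin> UNIV"
      proof (rule AE_mp)
        show "AE x in lborel. U (2*p-2) x = 0 \<longrightarrow> (x::real^'n) \<notin> UNIV"
        proof (rule AE_I2)
          fix x :: "real^'n" show "U (2*p-2) x = 0 \<longrightarrow> x \<notin> UNIV" using U_pos[of "2*p-2" x] by simp
        qed
      qed
      hence "UNIV \<in> null_sets (lborel :: (real^'n) measure)" using AE_iff_null_sets[of "UNIV::(real^'n) set" "lborel::(real^'n) measure"] by simp
      hence "emeasure (lborel :: (real^'n) measure) UNIV = 0" by (rule null_setsD1)
      thus False by simp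
    qed
    show ?thesis unfolding NU using k0 c0_pos I0 I1 by simp
  qed
  have "Phi W h \<ge> cc * hdot_norm2 h" using co[of h] rad hd i1 i2 B1 B2 by blast
  hence "- N \<ge> cc * N" unfolding Phi norm2 .
  thus False using cc Npos by (smt (verit) mult_pos_pos)
qed

end
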